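(* Let $\mathcal C$ be an essentially small additive category with cofibrations and $w$ an admissible class of morphisms in $\mathcal C$ such that $(\mathcal C,w)$ satisfies the factorization axiom. Then: (1) The class $w_{\mathrm{st}}|_{F_{wb}\mathcal C}$ of stable weak equivalences between weakly bounded filtered objects is the smallest admissible class of morphisms in $F_{wb}\mathcal C$ containing $lw|_{F_{wb}\mathcal C}$ and $\Theta_{F_{wb}\mathcal C}$. (2) $F_{wb}\mathcal C$ is the smallest $w_{\mathrm{st}}$-Serre subcategory of $F\mathcal C$ containing $\mathfrak j(\mathcal C)$. (3) For every morphism $f\colon x\to y$ in $F_{wb}\mathcal C$ with $x\in F_b\mathcal C$, there exists a factorization $f=p_f\circ i_f$ with $i_f\colon x\rightarrowtail u_f$ a level cofibration, $p_f\colon u_f\to y$ a stable weak equivalence, and $u_f\in F_b\mathcal C$.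
   Context: Admissible class: contains all isomorphisms, satisfies two-out-of-three, and for any commutative diagram of cofibration sequences with vertical maps $a,b,c$, two of $a,b,c$ in it implies the third is. Factorization axiom: every morphism factors as a cofibration followed by a morphism in $w$. $F\mathcal C$: functors $\mathbb N\to\mathcal C$ with $x_n=x(n)$, $i^x_n=x(n\le n+1)$, cofibrations = level cofibrations; $lw$ = level weak equivalences ($f_n\in w$ for all $n$); $w_{\mathrm{st}}$ = stable weak equivalences ($f_n\in w$ for all $n\ge N$ for some $N$). $x$ has amplitude in $[a,b]$ if $x_k=0$ for $k<a$ and $x_k=x_b$, $i^x_k=\mathrm{id}$ for $k\ge b$; $F_b\mathcal C$ = objects with amplitude in some $[a,b]$. $x$ is weakly bounded if there is $N$ with $i^x_n\in w$ for all $n\ge N$; $F_{wb}\mathcal C$ is the full subcategory of these. $\mathfrak j(x)$ is the constant filtered object at $x\in\mathcal C$ with identity transition maps; $\mathfrak j(\mathcal C)$ its image. The shift $x[1]$ has $x[1]_k=x_{k+1}$, $i^{x[1]}_k=i^x_{k+1}$; $\theta_x\colon x\to x[1]$ has components $(\theta_x)_k=i^x_k$; for a full subcategory $\mathcal D$ closed under shift, $\Theta_{\mathcal D}=\{\theta_x\}_{x\in\mathcal D}$. A $w_{\mathrm{st}}$-Serre subcategory of $F\mathcal C$ is a full subcategory such that for every level cofibration sequence two of $x,y,y/x$ in it implies the third is, and which is closed under finite zig-zags of stable weak equivalences. *)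

theory Defs
  imports Main
begin

record ('o,'m) ccat =
  Obj  :: "'o set"
  Arr  :: "'m set"
  dom  :: "'m \<Rightarrow> 'o"
  cod  :: "'m \<Rightarrow> 'o"
  comp :: "'m \<Rightarrow> 'm \<Rightarrow> 'm"   (* comp C g f = g \<circ> f *)
  idm  :: "'o \<Rightarrow> 'm"
  zero :: "'o"
  cofs :: "'m set"

definition hom :: "('o,'m) ccat \<Rightarrow> 'o \<Rightarrow> 'o \<Rightarrow> 'm set" where
  "hom C x y = {f \<in> Arr C. dom C f = x \<and> cod C f = y}"

definition is_category :: "('o,'m) ccat \<Rightarrow> bool" where
  "is_category C \<longleftrightarrow>
     (\<forall>f\<in>Arr C. dom C f \<in> Obj C \<and> cod C f \<in> Obj C) \<and>
     (\<forall>x\<in>Obj C. idm C x \<in> hom C x x) \<and>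
     (\<forall>f\<in>Arr C. \<forall>g\<in>Arr C. cod C f = dom C g \<longrightarrow> comp C g f \<in> hom C (dom C f) (cod C g)) \<and>
     (\<forall>f\<in>Arr C. \<forall>g\<in>Arr C. \<forall>h\<in>Arr C. cod C f = dom C g \<and> cod C g = dom C h \<longrightarrow>
         comp C h (comp C g f) = comp C (comp C h g) f) \<and>
     (\<forall>f\<in>Arr C. comp C f (idm C (dom C f)) = f \<and> comp C (idm C (cod C f)) f = f)"

definition is_zero_obj :: "('o,'m) ccat \<Rightarrow> 'o \<Rightarrow> bool" where
  "is_zero_obj C z \<longleftrightarrow> z \<in> Obj C \<and>
     (\<forall>x\<in>Obj C. (\<exists>!f. f \<in> hom C z x) \<and> (\<exists>!f. f \<in> hom C x z))"

definition to_zero :: "('o,'m) ccat \<Rightarrow> 'o \<Rightarrow> 'm" where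
  "to_zero C x = (THE f. f \<in> hom C x (zero C))"

definition from_zero :: "('o,'m) ccat \<Rightarrow> 'o \<Rightarrow> 'm" where
  "from_zero C y = (THE f. f \<in> hom C (zero C) y)"

definition zarr :: "('o,'m) ccat \<Rightarrow> 'o \<Rightarrow> 'o \<Rightarrow> 'm" where
  "zarr C x y = comp C (from_zero C y) (to_zero C x)"

definition is_iso :: "('o,'m) ccat \<Rightarrow> 'm \<Rightarrow> bool" where
  "is_iso C f \<longleftrightarrow> f \<in> Arr C \<and> (\<exists>g\<in>hom C (cod C f) (dom C f).
       comp C g f = idm C (dom C f) \<and> comp C f g = idm C (cod C f))"

definition is_pushout :: "('o,'m) ccat \<Rightarrow> 'm \<Rightarrow> 'm \<Rightarrow> 'm \<Rightarrow> 'm \<Rightarrow> bool" where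
  "is_pushout C i f j g \<longleftrightarrow>
     i \<in> Arr C \<and> f \<in> Arr C \<and> j \<in> Arr C \<and> g \<in> Arr C \<and>
     dom C f = dom C i \<and> dom C g = cod C i \<and> dom C j = cod C f \<and> cod C j = cod C g \<and>
     comp C g i = comp C j f \<and>
     (\<forall>t\<in>Obj C. \<forall>u\<in>hom C (cod C i) t. \<forall>v\<in>hom C (cod C f) t.
        comp C u i = comp C v f \<longrightarrow>
        (\<exists>!h. h \<in> hom C (cod C g) t \<and> comp C h g = u \<and> comp C h j = v))"

definition is_additive :: "('o,'m) ccat \<Rightarrow> bool" where
  "is_additive C \<longleftrightarrow> is_category C \<and> is_zero_obj C (zero C) \<and>
    (\<exists>add :: 'm \<Rightarrow> 'm \<Rightarrow> 'm.
      (\<forall>x\<in>Obj C. \<forall>y\<in>Obj C. \<forall>f\<in>hom C x y. \<forall>g\<in>hom C x y.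
          add f g \<in> hom C x y \<and> add f g = add g f \<and> add f (zarr C x y) = f \<and>
          (\<forall>h\<in>hom C x y. add (add f g) h = add f (add g h)) \<and>
          (\<exists>g'\<in>hom C x y. add f g' = zarr C x y)) \<and>
      (\<forall>x\<in>Obj C. \<forall>y\<in>Obj C. \<forall>z\<in>Obj C. \<forall>f\<in>hom C x y. \<forall>g\<in>hom C x y. \<forall>h\<in>hom C y z.
          comp C h (add f g) = add (comp C h f) (comp C h g)) \<and>
      (\<forall>x\<in>Obj C. \<forall>y\<in>Obj C. \<forall>z\<in>Obj C. \<forall>f\<in>hom C y z. \<forall>g\<in>hom C y z. \<forall>h\<in>hom C x y.
          comp C (add f g) h = add (comp C f h) (comp C g h)) \<and>
      (\<forall>a\<in>Obj C. \<forall>b\<in>Obj C. \<exists>s\<in>Obj C. \<exists>i1\<in>hom C a s. \<exists>i2\<in>hom C b s.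
          \<exists>p1\<in>hom C s a. \<exists>p2\<in>hom C s b.
          comp C p1 i1 = idm C a \<and> comp C p2 i2 = idm C b \<and>
          comp C p2 i1 = zarr C a b \<and> comp C p1 i2 = zarr C b a \<and>
          add (comp C i1 p1) (comp C i2 p2) = idm C s))"

text \<open>Category with cofibrations (Waldhausen's axioms without weak equivalences).\<close>
definition is_cat_with_cof :: "('o,'m) ccat \<Rightarrow> bool" where
  "is_cat_with_cof C \<longleftrightarrow> is_category C \<and> is_zero_obj C (zero C) \<and>
     cofs C \<subseteq> Arr C \<and>
     (\<forall>f. is_iso C f \<longrightarrow> f \<in> cofs C) \<and>
     (\<forall>f\<in>cofs C. \<forall>g\<in>cofs C. cod C f = dom C g \<longrightarrow> comp C g f \<in> cofs C) \<and>
     (\<forall>x\<in>Obj C. from_zero C x \<in> cofs C) \<and>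
     (\<forall>i\<in>cofs C. \<forall>f\<in>Arr C. dom C f = dom C i \<longrightarrow>
        (\<exists>j g. is_pushout C i f j g \<and> j \<in> cofs C))"

definition is_additive_cat_with_cof :: "('o,'m) ccat \<Rightarrow> bool" where
  "is_additive_cat_with_cof C \<longleftrightarrow> is_additive C \<and> is_cat_with_cof C"

text \<open>Cofibration sequence x >-> y ->> y/x : i cofibration, and the square
  (i, x -> 0, 0 -> z, p) is a pushout, i.e. z = y \<union>_x 0.\<close>
definition cofseq :: "('o,'m) ccat \<Rightarrow> 'm \<Rightarrow> 'm \<Rightarrow> bool" where
  "cofseq C i p \<longleftrightarrow> i \<in> cofs C \<and>
     is_pushout C i (to_zero C (dom C i)) (from_zero C (cod C p)) p"

definition admissible :: "('o,'m) ccat \<Rightarrow> 'm set \<Rightarrow> bool" where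
  "admissible C W \<longleftrightarrow> W \<subseteq> Arr C \<and>
     (\<forall>f. is_iso C f \<longrightarrow> f \<in> W) \<and>
     (\<forall>f\<in>Arr C. \<forall>g\<in>Arr C. cod C f = dom C g \<longrightarrow>
        (f \<in> W \<and> g \<in> W \<longrightarrow> comp C g f \<in> W) \<and>
        (f \<in> W \<and> comp C g f \<in> W \<longrightarrow> g \<in> W) \<and>
        (g \<in> W \<and> comp C g f \<in> W \<longrightarrow> f \<in> W)) \<and>
     (\<forall>i p i' p' a b c. cofseq C i p \<and> cofseq C i' p' \<and>
        a \<in> hom C (dom C i) (dom C i') \<and> b \<in> hom C (cod C i) (cod C i') \<and>
        c \<in> hom C (cod C p) (cod C p') \<and>
        comp C b i = comp C i' a \<and> comp C c p = comp C p' b \<longrightarrow>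
        (a \<in> W \<and> b \<in> W \<longrightarrow> c \<in> W) \<and>
        (a \<in> W \<and> c \<in> W \<longrightarrow> b \<in> W) \<and>
        (b \<in> W \<and> c \<in> W \<longrightarrow> a \<in> W))"

definition factorization_axiom :: "('o,'m) ccat \<Rightarrow> 'm set \<Rightarrow> bool" where
  "factorization_axiom C W \<longleftrightarrow>
     (\<forall>f\<in>Arr C. \<exists>i q. i \<in> cofs C \<and> q \<in> W \<and> q \<in> Arr C \<and>
        dom C i = dom C f \<and> cod C i = dom C q \<and> cod C q = cod C f \<and> comp C q i = f)"

text \<open>A filtered object is a pair (x, i) with x n an object and i n : x n -> x (n+1).\<close>
type_synonym ('o,'m) fobj = "(nat \<Rightarrow> 'o) \<times> (nat \<Rightarrow> 'm)"

record ('o,'m) fmor =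
  fdom  :: "('o,'m) fobj"
  fcod  :: "('o,'m) fobj"
  fcomp :: "nat \<Rightarrow> 'm"

definition fobjs :: "('o,'m) ccat \<Rightarrow> ('o,'m) fobj set" where
  "fobjs C = {(x, i). \<forall>n. x n \<in> Obj C \<and> i n \<in> hom C (x n) (x (Suc n))}"

definition FC :: "('o,'m) ccat \<Rightarrow> (('o,'m) fobj, ('o,'m) fmor) ccat" where
  "FC C = \<lparr> Obj = fobjs C,
      Arr = {f. fdom f \<in> fobjs C \<and> fcod f \<in> fobjs C \<and>
              (\<forall>n. fcomp f n \<in> hom C (fst (fdom f) n) (fst (fcod f) n) \<and>
                   comp C (snd (fcod f) n) (fcomp f n) = comp C (fcomp f (Suc n)) (snd (fdom f) n))},
      dom = fdom, cod = fcod,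
      comp = (\<lambda>g f. \<lparr> fdom = fdom f, fcod = fcod g, fcomp = (\<lambda>n. comp C (fcomp g n) (fcomp f n)) \<rparr>),
      idm = (\<lambda>x. \<lparr> fdom = x, fcod = x, fcomp = (\<lambda>n. idm C (fst x n)) \<rparr>),
      zero = ((\<lambda>n. zero C), (\<lambda>n. idm C (zero C))),
      cofs = {f. fdom f \<in> fobjs C \<and> fcod f \<in> fobjs C \<and>
              (\<forall>n. fcomp f n \<in> hom C (fst (fdom f) n) (fst (fcod f) n) \<and>
                   comp C (snd (fcod f) n) (fcomp f n) = comp C (fcomp f (Suc n)) (snd (fdom f) n)) \<and>
              (\<forall>n. fcomp f n \<in> cofs C)} \<rparr>"

definition fullsub :: "('o,'m) ccat \<Rightarrow> 'o set \<Rightarrow> ('o,'m) ccat" where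
  "fullsub D S = D\<lparr> Obj := S,
      Arr := {f \<in> Arr D. dom D f \<in> S \<and> cod D f \<in> S},
      cofs := {f \<in> cofs D. dom D f \<in> S \<and> cod D f \<in> S} \<rparr>"

definition lw :: "('o,'m) ccat \<Rightarrow> 'm set \<Rightarrow> ('o,'m) fmor set" where
  "lw C W = {f \<in> Arr (FC C). \<forall>n. fcomp f n \<in> W}"

definition wst :: "('o,'m) ccat \<Rightarrow> 'm set \<Rightarrow> ('o,'m) fmor set" where
  "wst C W = {f \<in> Arr (FC C). \<exists>N. \<forall>n\<ge>N. fcomp f n \<in> W}"

text \<open>Objects with amplitude in some [a,b]; x_k = 0 means equal to the chosen zero object.\<close>
definition Fb :: "('o,'m) ccat \<Rightarrow> ('o,'m) fobj set" where
  "Fb C = {(x, i) \<in> fobjs C. \<exists>a b. a \<le> b \<and>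
      (\<forall>k<a. x k = zero C) \<and> (\<forall>k\<ge>b. x k = x b \<and> i k = idm C (x b))}"

definition Fwb :: "('o,'m) ccat \<Rightarrow> 'm set \<Rightarrow> ('o,'m) fobj set" where
  "Fwb C W = {(x, i) \<in> fobjs C. \<exists>N. \<forall>n\<ge>N. i n \<in> W}"

definition FwbC :: "('o,'m) ccat \<Rightarrow> 'm set \<Rightarrow> (('o,'m) fobj, ('o,'m) fmor) ccat" where
  "FwbC C W = fullsub (FC C) (Fwb C W)"

definition jconst :: "('o,'m) ccat \<Rightarrow> 'o \<Rightarrow> ('o,'m) fobj" where
  "jconst C c = ((\<lambda>n. c), (\<lambda>n. idm C c))"

definition shift :: "('o,'m) fobj \<Rightarrow> ('o,'m) fobj" where
  "shift X = ((\<lambda>k. fst X (Suc k)), (\<lambda>k. snd X (Suc k)))"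

definition theta :: "('o,'m) fobj \<Rightarrow> ('o,'m) fmor" where
  "theta X = \<lparr> fdom = X, fcod = shift X, fcomp = snd X \<rparr>"

definition Theta :: "('o,'m) fobj set \<Rightarrow> ('o,'m) fmor set" where
  "Theta D = theta ` D"

definition wst_serre :: "('o,'m) ccat \<Rightarrow> 'm set \<Rightarrow> ('o,'m) fobj set \<Rightarrow> bool" where
  "wst_serre C W S \<longleftrightarrow> S \<subseteq> Obj (FC C) \<and>
     (\<forall>i p. cofseq (FC C) i p \<longrightarrow>
        (let x = fdom i; y = fcod i; z = fcod p in
          (x \<in> S \<and> y \<in> S \<longrightarrow> z \<in> S) \<and> (x \<in> S \<and> z \<in> S \<longrightarrow> y \<in> S) \<and>
          (y \<in> S \<and> z \<in> S \<longrightarrow> x \<in> S))) \<and>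
     (\<forall>x y. x \<in> S \<and>
        (\<lambda>a b. \<exists>f\<in>wst C W. (fdom f = a \<and> fcod f = b) \<or> (fdom f = b \<and> fcod f = a))\<^sup>*\<^sup>* x y
        \<longrightarrow> y \<in> S)"

end

theory Submission
  imports Defs
begin


lemma fmor_eqI:
  fixes f g :: "('o,'m) fmor"
  shows "fdom f = fdom g \<Longrightarrow> fcod f = fcod g \<Longrightarrow> (\<And>n. fcomp f n = fcomp g n) \<Longrightarrow> f = g"
  by (cases f, cases g) auto

lemma FC_simps:
  "Obj (FC C) = fobjs C" "dom (FC C) = fdom" "cod (FC C) = fcod"
  "comp (FC C) g f = \<lparr> fdom = fdom f, fcod = fcod g, fcomp = (\<lambda>n. comp C (fcomp g n) (fcomp f n)) \<rparr>"
  "idm (FC C) X = \<lparr> fdom = X, fcod = X, fcomp = (\<lambda>n. idm C (fst X n)) \<rparr>"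
  "zero (FC C) = ((\<lambda>n. zero C), (\<lambda>n. idm C (zero C)))"
  by (simp_all add: FC_def)

lemma arrFC: "f \<in> Arr (FC C) \<longleftrightarrow> fdom f \<in> fobjs C \<and> fcod f \<in> fobjs C \<and>
              (\<forall>n. fcomp f n \<in> hom C (fst (fdom f) n) (fst (fcod f) n) \<and>
                   comp C (snd (fcod f) n) (fcomp f n) = comp C (fcomp f (Suc n)) (snd (fdom f) n))"
  by (simp add: FC_def)

lemma cofsFC: "f \<in> cofs (FC C) \<longleftrightarrow> f \<in> Arr (FC C) \<and> (\<forall>n. fcomp f n \<in> cofs C)"
  by (auto simp add: FC_def)

lemma fullsub_simps:
  "Obj (fullsub D S) = S" "Arr (fullsub D S) = {f \<in> Arr D. dom D f \<in> S \<and> cod D f \<in> S}"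
  "dom (fullsub D S) = dom D" "cod (fullsub D S) = cod D" "comp (fullsub D S) = comp D"
  "idm (fullsub D S) = idm D" "zero (fullsub D S) = zero D"
  "cofs (fullsub D S) = {f \<in> cofs D. dom D f \<in> S \<and> cod D f \<in> S}"
  by (simp_all add: fullsub_def)

lemma fobjs_iff: "X \<in> fobjs C \<longleftrightarrow> (\<forall>n. fst X n \<in> Obj C \<and> snd X n \<in> hom C (fst X n) (fst X (Suc n)))"
  by (cases X) (simp add: fobjs_def)

lemma Fwb_iff: "X \<in> Fwb C w \<longleftrightarrow> X \<in> fobjs C \<and> (\<exists>N. \<forall>n\<ge>N. snd X n \<in> w)"
  by (cases X) (simp add: Fwb_def)

lemma Fb_iff: "X \<in> Fb C \<longleftrightarrow> X \<in> fobjs C \<and> (\<exists>a b. a \<le> b \<and>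
      (\<forall>k<a. fst X k = zero C) \<and> (\<forall>k\<ge>b. fst X k = fst X b \<and> snd X k = idm C (fst X b)))"
  by (cases X) (simp add: Fb_def)

lemma FC_full: "fullsub (FC C) (fobjs C) = FC C"
  unfolding fullsub_def FC_def by auto

primrec trd :: "('o,'m) ccat \<Rightarrow> ('o,'m) fobj \<Rightarrow> nat \<Rightarrow> nat \<Rightarrow> 'm" where
  "trd C X k 0 = idm C (fst X k)"
| "trd C X k (Suc d) = comp C (snd X (k + d)) (trd C X k d)"

locale cc =
  fixes C :: "('o,'m) ccat" and w :: "'m set"
  assumes addc: "is_additive_cat_with_cof C"
    and adm: "admissible C w"
    and fax: "factorization_axiom C w"
begin

lemma cat: "is_category C" using addc unfolding is_additive_cat_with_cof_def is_additive_def by auto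
lemma zobj: "is_zero_obj C (zero C)" using addc unfolding is_additive_cat_with_cof_def is_additive_def by auto
lemma cwc: "is_cat_with_cof C" using addc unfolding is_additive_cat_with_cof_def by auto

lemma homD: "f \<in> hom C x y \<Longrightarrow> f \<in> Arr C \<and> dom C f = x \<and> cod C f = y" by (simp add: hom_def)
lemma homI: "f \<in> Arr C \<Longrightarrow> dom C f = x \<Longrightarrow> cod C f = y \<Longrightarrow> f \<in> hom C x y" by (simp add: hom_def)
lemma hom_obj: "f \<in> hom C x y \<Longrightarrow> x \<in> Obj C \<and> y \<in> Obj C"
  using cat unfolding is_category_def hom_def by auto
lemma comp_hom: "f \<in> hom C x y \<Longrightarrow> g \<in> hom C y z \<Longrightarrow> comp C g f \<in> hom C x z"
  using cat unfolding is_category_def hom_def by auto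
lemma id_hom: "x \<in> Obj C \<Longrightarrow> idm C x \<in> hom C x x"
  using cat unfolding is_category_def by auto
lemma assoc: "f \<in> hom C x y \<Longrightarrow> g \<in> hom C y z \<Longrightarrow> h \<in> hom C z u \<Longrightarrow>
   comp C h (comp C g f) = comp C (comp C h g) f"
  using cat unfolding is_category_def hom_def by auto
lemma idl: "f \<in> hom C x y \<Longrightarrow> comp C (idm C y) f = f"
  using cat unfolding is_category_def hom_def by auto
lemma idr: "f \<in> hom C x y \<Longrightarrow> comp C f (idm C x) = f"
  using cat unfolding is_category_def hom_def by auto

lemma zero_in: "zero C \<in> Obj C" using zobj unfolding is_zero_obj_def by auto

lemma to_zero_hom: "x \<in> Obj C \<Longrightarrow> to_zero C x \<in> hom C x (zero C)"
  using zobj unfolding is_zero_obj_def to_zero_def by (metis theI')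
lemma from_zero_hom: "x \<in> Obj C \<Longrightarrow> from_zero C x \<in> hom C (zero C) x"
  using zobj unfolding is_zero_obj_def from_zero_def by (metis theI')
lemma to_zero_uniq: "f \<in> hom C x (zero C) \<Longrightarrow> g \<in> hom C x (zero C) \<Longrightarrow> f = g"
  using zobj hom_obj unfolding is_zero_obj_def by metis
lemma from_zero_uniq: "f \<in> hom C (zero C) x \<Longrightarrow> g \<in> hom C (zero C) x \<Longrightarrow> f = g"
  using zobj hom_obj unfolding is_zero_obj_def by metis

lemma iso_w: "is_iso C f \<Longrightarrow> f \<in> w" using adm unfolding admissible_def by auto
lemma id_iso: "x \<in> Obj C \<Longrightarrow> is_iso C (idm C x)"
  unfolding is_iso_def using id_hom[of x] homD[of "idm C x" x x] idl[of "idm C x" x x] by auto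
lemma id_w: "x \<in> Obj C \<Longrightarrow> idm C x \<in> w" using iso_w id_iso by auto
lemma id_cof: "x \<in> Obj C \<Longrightarrow> idm C x \<in> cofs C" using cwc id_iso unfolding is_cat_with_cof_def by auto

lemma w_comp: "f \<in> hom C x y \<Longrightarrow> g \<in> hom C y z \<Longrightarrow> f \<in> w \<Longrightarrow> g \<in> w \<Longrightarrow> comp C g f \<in> w"
  using adm unfolding admissible_def hom_def by auto
lemma w_left: "f \<in> hom C x y \<Longrightarrow> g \<in> hom C y z \<Longrightarrow> f \<in> w \<Longrightarrow> comp C g f \<in> w \<Longrightarrow> g \<in> w"
  using adm unfolding admissible_def hom_def by auto
lemma w_right: "f \<in> hom C x y \<Longrightarrow> g \<in> hom C y z \<Longrightarrow> g \<in> w \<Longrightarrow> comp C g f \<in> w \<Longrightarrow> f \<in> w"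
  using adm unfolding admissible_def hom_def by auto

lemma w_cofseq: "cofseq C i p \<Longrightarrow> cofseq C i' p' \<Longrightarrow>
        a \<in> hom C (dom C i) (dom C i') \<Longrightarrow> b \<in> hom C (cod C i) (cod C i') \<Longrightarrow>
        c \<in> hom C (cod C p) (cod C p') \<Longrightarrow>
        comp C b i = comp C i' a \<Longrightarrow> comp C c p = comp C p' b \<Longrightarrow>
        (a \<in> w \<and> b \<in> w \<longrightarrow> c \<in> w) \<and>
        (a \<in> w \<and> c \<in> w \<longrightarrow> b \<in> w) \<and>
        (b \<in> w \<and> c \<in> w \<longrightarrow> a \<in> w)"
  using adm unfolding admissible_def by blast

end


definition ZF :: "('o,'m) ccat \<Rightarrow> ('o,'m) fobj \<Rightarrow> ('o,'m) fmor" where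
  "ZF C x = \<lparr> fdom = x, fcod = zero (FC C), fcomp = (\<lambda>k. to_zero C (fst x k)) \<rparr>"
definition FZ :: "('o,'m) ccat \<Rightarrow> ('o,'m) fobj \<Rightarrow> ('o,'m) fmor" where
  "FZ C y = \<lparr> fdom = zero (FC C), fcod = y, fcomp = (\<lambda>k. from_zero C (fst y k)) \<rparr>"
definition Tob :: "('o,'m) ccat \<Rightarrow> nat \<Rightarrow> 'o \<Rightarrow> ('o,'m) fobj" where
  "Tob C n t = ((\<lambda>k. if k \<le> n then t else zero C),
                (\<lambda>k. if k < n then idm C t else to_zero C (if k \<le> n then t else zero C)))"
definition Gen :: "('o,'m) ccat \<Rightarrow> ('o,'m) fobj \<Rightarrow> nat \<Rightarrow> 'o \<Rightarrow> 'm \<Rightarrow> ('o,'m) fmor" where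
  "Gen C X n t g = \<lparr> fdom = X, fcod = Tob C n t,
     fcomp = (\<lambda>k. if k \<le> n then comp C g (trd C X k (n - k)) else to_zero C (fst X k)) \<rparr>"

context cc begin

lemma fobjD: "X \<in> fobjs C \<Longrightarrow> fst X n \<in> Obj C \<and> snd X n \<in> hom C (fst X n) (fst X (Suc n))"
  by (simp add: fobjs_iff)
lemma fobjD2: "X \<in> fobjs C \<Longrightarrow> snd X n \<in> hom C (fst X n) (fst X (Suc n))"
  by (simp add: fobjs_iff)

lemma trd_hom: "X \<in> fobjs C \<Longrightarrow> trd C X k d \<in> hom C (fst X k) (fst X (k + d))"
proof (induction d)
  case 0 then show ?case using fobjD id_hom by auto
next
  case (Suc d) 
  have "comp C (snd X (k+d)) (trd C X k d) \<in> hom C (fst X k) (fst X (Suc (k + d)))"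
    by (rule comp_hom[OF Suc.IH[OF Suc.prems] fobjD2[OF Suc.prems]])
  then show ?case by simp
qed

lemma trd_Suc_left: "X \<in> fobjs C \<Longrightarrow> trd C X k (Suc d) = comp C (trd C X (Suc k) d) (snd X k)"
proof (induction d)
  case 0 then show ?case using idl[OF fobjD2[OF 0, of k]] idr[OF fobjD2[OF 0, of k]] by simp
next
  case (Suc d)
  have h1: "snd X k \<in> hom C (fst X k) (fst X (Suc k))" by (rule fobjD2[OF Suc.prems])
  have h2: "trd C X (Suc k) d \<in> hom C (fst X (Suc k)) (fst X (Suc (k + d)))"
    using trd_hom[OF Suc.prems, of "Suc k" d] by simp
  have h3: "snd X (Suc (k+d)) \<in> hom C (fst X (Suc (k+d))) (fst X (Suc (Suc (k+d))))" by (rule fobjD2[OF Suc.prems])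
  have "trd C X k (Suc (Suc d)) = comp C (snd X (Suc (k + d))) (comp C (trd C X (Suc k) d) (snd X k))"
    using Suc by simp
  also have "\<dots> = comp C (comp C (snd X (Suc (k + d))) (trd C X (Suc k) d)) (snd X k)"
    by (rule assoc[OF h1 h2 h3])
  finally show ?case by simp
qed

lemma arrFCD: "f \<in> Arr (FC C) \<Longrightarrow> fdom f \<in> fobjs C \<and> fcod f \<in> fobjs C \<and>
     fcomp f n \<in> hom C (fst (fdom f) n) (fst (fcod f) n) \<and>
     comp C (snd (fcod f) n) (fcomp f n) = comp C (fcomp f (Suc n)) (snd (fdom f) n)"
  by (simp add: arrFC)

lemma trd_w: "X \<in> fobjs C \<Longrightarrow> \<forall>n\<ge>N. snd X n \<in> w \<Longrightarrow> k \<ge> N \<Longrightarrow> trd C X k d \<in> w"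
proof (induction d)
  case 0 then show ?case using fobjD id_w by auto
next
  case (Suc d) 
  have a: "trd C X k d \<in> w" by (rule Suc.IH[OF Suc.prems])
  have b: "snd X (k+d) \<in> w" using Suc.prems by simp
  have "comp C (snd X (k+d)) (trd C X k d) \<in> w"
    by (rule w_comp[OF trd_hom[OF Suc.prems(1)] fobjD2[OF Suc.prems(1)] a b])
  then show ?case by simp
qed

lemma trd_const: "X \<in> fobjs C \<Longrightarrow> \<forall>n\<ge>M. fst X n = fst X M \<and> snd X n = idm C (fst X M) \<Longrightarrow> k \<ge> M
   \<Longrightarrow> trd C X k d = idm C (fst X M)"
proof (induction d)
  case 0 
  have "fst X k = fst X M" using 0(2,3) by blast
  then show ?case by simp
next
  case (Suc d) 
  have e: "snd X (k+d) = idm C (fst X M)" using Suc.prems(2,3) le_add1 order_trans by blast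
  have t: "trd C X k d = idm C (fst X M)" by (rule Suc.IH[OF Suc.prems])
  have h: "idm C (fst X M) \<in> hom C (fst X M) (fst X M)" using id_hom fobjD[OF Suc.prems(1)] by auto
  show ?case unfolding trd.simps e t by (rule idl[OF h])
qed

lemma trd_nat: "f \<in> Arr (FC C) \<Longrightarrow>
   comp C (trd C (fcod f) k d) (fcomp f k) = comp C (fcomp f (k+d)) (trd C (fdom f) k d)"
proof (induction d)
  case 0 
  have f0: "fcomp f k \<in> hom C (fst (fdom f) k) (fst (fcod f) k)" using arrFCD[OF 0] by auto
  show ?case using idl[OF f0] idr[OF f0] by simp
next
  case (Suc d)
  note A = arrFCD[OF Suc.prems]
  have h1: "trd C (fcod f) k d \<in> hom C (fst (fcod f) k) (fst (fcod f) (k+d))" using A trd_hom by auto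
  have h2: "trd C (fdom f) k d \<in> hom C (fst (fdom f) k) (fst (fdom f) (k+d))" using A trd_hom by auto
  have f0: "fcomp f k \<in> hom C (fst (fdom f) k) (fst (fcod f) k)" using A by auto
  have f1: "fcomp f (k+d) \<in> hom C (fst (fdom f) (k+d)) (fst (fcod f) (k+d))" using arrFCD[OF Suc.prems] by auto
  have f2: "fcomp f (Suc (k+d)) \<in> hom C (fst (fdom f) (Suc (k+d))) (fst (fcod f) (Suc (k+d)))" using arrFCD[OF Suc.prems] by auto
  have s1: "snd (fcod f) (k+d) \<in> hom C (fst (fcod f) (k+d)) (fst (fcod f) (Suc (k+d)))" using A fobjD2 by auto
  have s2: "snd (fdom f) (k+d) \<in> hom C (fst (fdom f) (k+d)) (fst (fdom f) (Suc (k+d)))" using A fobjD2 by auto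
  have "comp C (trd C (fcod f) k (Suc d)) (fcomp f k)
     = comp C (comp C (snd (fcod f) (k+d)) (trd C (fcod f) k d)) (fcomp f k)" by simp
  also have "\<dots> = comp C (snd (fcod f) (k+d)) (comp C (trd C (fcod f) k d) (fcomp f k))"
    by (rule assoc[OF f0 h1 s1, symmetric])
  also have "\<dots> = comp C (snd (fcod f) (k+d)) (comp C (fcomp f (k+d)) (trd C (fdom f) k d))"
    using Suc by simp
  also have "\<dots> = comp C (comp C (snd (fcod f) (k+d)) (fcomp f (k+d))) (trd C (fdom f) k d)"
    by (rule assoc[OF h2 f1 s1])
  also have "\<dots> = comp C (comp C (fcomp f (Suc (k+d))) (snd (fdom f) (k+d))) (trd C (fdom f) k d)"
    using arrFCD[OF Suc.prems, of "k+d"] by simp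
  also have "\<dots> = comp C (fcomp f (Suc (k+d))) (comp C (snd (fdom f) (k+d)) (trd C (fdom f) k d))"
    by (rule assoc[OF h2 s2 f2, symmetric])
  finally show ?case by simp
qed

lemma comp_arrFC: assumes f: "f \<in> Arr (FC C)" and g: "g \<in> Arr (FC C)" and e: "fcod f = fdom g"
  shows "comp (FC C) g f \<in> Arr (FC C)"
proof -
  have "comp C (fcomp g n) (fcomp f n) \<in> hom C (fst (fdom f) n) (fst (fcod g) n) \<and>
     comp C (snd (fcod g) n) (comp C (fcomp g n) (fcomp f n)) =
     comp C (comp C (fcomp g (Suc n)) (fcomp f (Suc n))) (snd (fdom f) n)" for n
  proof -
    note F = arrFCD[OF f] and G = arrFCD[OF g]
    have f0: "fcomp f n \<in> hom C (fst (fdom f) n) (fst (fdom g) n)" using F[of n] e by simp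
    have f1: "fcomp f (Suc n) \<in> hom C (fst (fdom f) (Suc n)) (fst (fdom g) (Suc n))" using F[of "Suc n"] e by simp
    have g0: "fcomp g n \<in> hom C (fst (fdom g) n) (fst (fcod g) n)" using G by simp
    have g1: "fcomp g (Suc n) \<in> hom C (fst (fdom g) (Suc n)) (fst (fcod g) (Suc n))" using G by simp
    have sx: "snd (fdom f) n \<in> hom C (fst (fdom f) n) (fst (fdom f) (Suc n))" using F fobjD2 by auto
    have sy: "snd (fdom g) n \<in> hom C (fst (fdom g) n) (fst (fdom g) (Suc n))" using G fobjD2 by auto
    have sz: "snd (fcod g) n \<in> hom C (fst (fcod g) n) (fst (fcod g) (Suc n))" using G fobjD2 by auto
    have nf: "comp C (snd (fdom g) n) (fcomp f n) = comp C (fcomp f (Suc n)) (snd (fdom f) n)"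
      using F[of n] e by simp
    have ng: "comp C (snd (fcod g) n) (fcomp g n) = comp C (fcomp g (Suc n)) (snd (fdom g) n)"
      using G[of n] by simp
    have "comp C (snd (fcod g) n) (comp C (fcomp g n) (fcomp f n))
        = comp C (comp C (snd (fcod g) n) (fcomp g n)) (fcomp f n)" by (rule assoc[OF f0 g0 sz])
    also have "\<dots> = comp C (comp C (fcomp g (Suc n)) (snd (fdom g) n)) (fcomp f n)" using ng by simp
    also have "\<dots> = comp C (fcomp g (Suc n)) (comp C (snd (fdom g) n) (fcomp f n))" by (rule assoc[OF f0 sy g1, symmetric])
    also have "\<dots> = comp C (fcomp g (Suc n)) (comp C (fcomp f (Suc n)) (snd (fdom f) n))" using nf by simp
    also have "\<dots> = comp C (comp C (fcomp g (Suc n)) (fcomp f (Suc n))) (snd (fdom f) n)" by (rule assoc[OF sx f1 g1])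
    finally show ?thesis using comp_hom[OF f0 g0] by simp
  qed
  then show ?thesis using arrFCD[OF f] arrFCD[OF g] by (simp add: arrFC FC_simps)
qed


lemma zF_fobj: "zero (FC C) \<in> fobjs C"
  using zero_in id_hom by (simp add: FC_simps fobjs_iff)
lemma zF_Fwb: "zero (FC C) \<in> Fwb C w"
  using zF_fobj zero_in id_w by (auto simp add: FC_simps Fwb_iff)
lemma fst_zF[simp]: "fst (zero (FC C)) k = zero C" by (simp add: FC_simps)

lemma ZF_arr: assumes x: "x \<in> fobjs C" shows "ZF C x \<in> Arr (FC C)"
proof -
  have "to_zero C (fst x n) \<in> hom C (fst x n) (zero C) \<and>
     comp C (idm C (zero C)) (to_zero C (fst x n)) = comp C (to_zero C (fst x (Suc n))) (snd x n)" for n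
  proof -
    have a: "to_zero C (fst x n) \<in> hom C (fst x n) (zero C)" using to_zero_hom fobjD[OF x] by auto
    have b: "to_zero C (fst x (Suc n)) \<in> hom C (fst x (Suc n)) (zero C)" using to_zero_hom fobjD[OF x] by auto
    have "comp C (idm C (zero C)) (to_zero C (fst x n)) \<in> hom C (fst x n) (zero C)"
      using comp_hom[OF a id_hom[OF zero_in]] .
    moreover have "comp C (to_zero C (fst x (Suc n))) (snd x n) \<in> hom C (fst x n) (zero C)"
      using comp_hom[OF fobjD2[OF x] b] .
    ultimately show ?thesis using a to_zero_uniq by blast
  qed
  then show ?thesis using x zF_fobj by (simp add: arrFC ZF_def FC_simps)
qed

lemma ZF_uniq: assumes f: "f \<in> Arr (FC C)" and c: "fcod f = zero (FC C)" shows "f = ZF C (fdom f)"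
proof (rule fmor_eqI)
  fix n
  have "fcomp f n \<in> hom C (fst (fdom f) n) (zero C)" using arrFCD[OF f, of n] c by simp
  moreover have "to_zero C (fst (fdom f) n) \<in> hom C (fst (fdom f) n) (zero C)"
    using to_zero_hom arrFCD[OF f] fobjD by blast
  ultimately show "fcomp f n = fcomp (ZF C (fdom f)) n" using to_zero_uniq by (simp add: ZF_def)
qed (use c in \<open>simp_all add: ZF_def\<close>)

lemma FZ_arr: assumes x: "x \<in> fobjs C" shows "FZ C x \<in> Arr (FC C)"
proof -
  have "from_zero C (fst x n) \<in> hom C (zero C) (fst x n) \<and>
     comp C (snd x n) (from_zero C (fst x n)) = comp C (from_zero C (fst x (Suc n))) (idm C (zero C))" for n
  proof -
    have a: "from_zero C (fst x n) \<in> hom C (zero C) (fst x n)" using from_zero_hom fobjD[OF x] by auto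
    have b: "from_zero C (fst x (Suc n)) \<in> hom C (zero C) (fst x (Suc n))" using from_zero_hom fobjD[OF x] by auto
    have "comp C (from_zero C (fst x (Suc n))) (idm C (zero C)) \<in> hom C (zero C) (fst x (Suc n))"
      using comp_hom[OF id_hom[OF zero_in] b] .
    moreover have "comp C (snd x n) (from_zero C (fst x n)) \<in> hom C (zero C) (fst x (Suc n))"
      using comp_hom[OF a fobjD2[OF x]] .
    ultimately show ?thesis using a from_zero_uniq by blast
  qed
  then show ?thesis using x zF_fobj by (simp add: arrFC FZ_def FC_simps)
qed

lemma FZ_uniq: assumes f: "f \<in> Arr (FC C)" and c: "fdom f = zero (FC C)" shows "f = FZ C (fcod f)"
proof (rule fmor_eqI)
  fix n
  have "fcomp f n \<in> hom C (zero C) (fst (fcod f) n)" using arrFCD[OF f, of n] c by simp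
  moreover have "from_zero C (fst (fcod f) n) \<in> hom C (zero C) (fst (fcod f) n)"
    using from_zero_hom arrFCD[OF f] fobjD by blast
  ultimately show "fcomp f n = fcomp (FZ C (fcod f)) n" using from_zero_uniq by (simp add: FZ_def)
qed (use c in \<open>simp_all add: FZ_def\<close>)

lemma hom_sub: "hom (fullsub (FC C) S) x y = {f \<in> Arr (FC C). fdom f \<in> S \<and> fcod f \<in> S \<and> fdom f = x \<and> fcod f = y}"
  by (auto simp add: hom_def fullsub_simps FC_simps)

lemma to_zero_sub: assumes S: "S \<subseteq> fobjs C" "zero (FC C) \<in> S" and x: "x \<in> S"
  shows "to_zero (fullsub (FC C) S) x = ZF C x"
  unfolding to_zero_def fullsub_simps
proof (rule the_equality)
  show "ZF C x \<in> hom (fullsub (FC C) S) x (zero (FC C))"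
    using ZF_arr[of x] S x by (auto simp add: hom_sub ZF_def)
  fix f assume "f \<in> hom (fullsub (FC C) S) x (zero (FC C))"
  then show "f = ZF C x" using ZF_uniq by (auto simp add: hom_sub)
qed

lemma from_zero_sub: assumes S: "S \<subseteq> fobjs C" "zero (FC C) \<in> S" and x: "x \<in> S"
  shows "from_zero (fullsub (FC C) S) x = FZ C x"
  unfolding from_zero_def fullsub_simps
proof (rule the_equality)
  show "FZ C x \<in> hom (fullsub (FC C) S) (zero (FC C)) x"
    using FZ_arr[of x] S x by (auto simp add: hom_sub FZ_def)
  fix f assume "f \<in> hom (fullsub (FC C) S) (zero (FC C)) x"
  then show "f = FZ C x" using FZ_uniq by (auto simp add: hom_sub)
qed

lemma fst_Tob: "fst (Tob C n t) k = (if k \<le> n then t else zero C)" by (simp add: Tob_def)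
lemma snd_Tob: "snd (Tob C n t) k = (if k < n then idm C t else to_zero C (if k \<le> n then t else zero C))"
  by (simp add: Tob_def)

lemma Tob_fobj: assumes t: "t \<in> Obj C" shows "Tob C n t \<in> fobjs C"
  unfolding fobjs_iff fst_Tob snd_Tob
  using t zero_in id_hom to_zero_hom by auto

lemma tz_zero: "to_zero C (zero C) = idm C (zero C)"
  using to_zero_uniq to_zero_hom id_hom zero_in by blast

lemma Tob_Fwb: assumes t: "t \<in> Obj C" shows "Tob C n t \<in> Fwb C w"
  unfolding Fwb_iff using Tob_fobj[OF t]
  by (intro conjI exI[of _ "Suc n"]) (auto simp add: snd_Tob tz_zero id_w zero_in)

lemma Gen_arr: assumes X: "X \<in> fobjs C" and t: "t \<in> Obj C" and g: "g \<in> hom C (fst X n) t"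
  shows "Gen C X n t g \<in> Arr (FC C)"
proof -
  have H: "fcomp (Gen C X n t g) k \<in> hom C (fst X k) (fst (Tob C n t) k)" for k
  proof (cases "k \<le> n")
    case True
    have "trd C X k (n - k) \<in> hom C (fst X k) (fst X n)" using trd_hom[OF X, of k "n-k"] True by simp
    then show ?thesis using True comp_hom[OF _ g] by (simp add: Gen_def fst_Tob)
  next
    case False then show ?thesis using to_zero_hom fobjD[OF X] by (simp add: Gen_def fst_Tob)
  qed
  have N: "comp C (snd (Tob C n t) k) (fcomp (Gen C X n t g) k) =
      comp C (fcomp (Gen C X n t g) (Suc k)) (snd X k)" for k
  proof (cases "k < n")
    case True
    have h1: "trd C X (Suc k) (n - Suc k) \<in> hom C (fst X (Suc k)) (fst X n)"
      using trd_hom[OF X, of "Suc k" "n - Suc k"] True by simp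
    have e: "trd C X k (n - k) = comp C (trd C X (Suc k) (n - Suc k)) (snd X k)"
      using trd_Suc_left[OF X, of k "n - Suc k"] True by (simp add: Suc_diff_Suc)
    have "comp C (snd (Tob C n t) k) (fcomp (Gen C X n t g) k) = fcomp (Gen C X n t g) k"
      using H[of k] True idl by (simp add: snd_Tob fst_Tob)
    also have "\<dots> = comp C g (comp C (trd C X (Suc k) (n - Suc k)) (snd X k))"
      using True e by (simp add: Gen_def)
    also have "\<dots> = comp C (comp C g (trd C X (Suc k) (n - Suc k))) (snd X k)"
      by (rule assoc[OF fobjD2[OF X] h1 g])
    also have "\<dots> = comp C (fcomp (Gen C X n t g) (Suc k)) (snd X k)"
      using True by (simp add: Gen_def)
    finally show ?thesis .
  next
    case False
    have a: "comp C (snd (Tob C n t) k) (fcomp (Gen C X n t g) k) \<in> hom C (fst X k) (zero C)"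
      using comp_hom[OF H[of k] fobjD2[OF Tob_fobj[OF t, of n], of k]] False by (simp add: fst_Tob)
    have b: "comp C (fcomp (Gen C X n t g) (Suc k)) (snd X k) \<in> hom C (fst X k) (zero C)"
      using comp_hom[OF fobjD2[OF X, of k] H[of "Suc k"]] False by (simp add: fst_Tob)
    show ?thesis using a b to_zero_uniq by blast
  qed
  show ?thesis using H N X Tob_fobj[OF t] by (simp add: arrFC Gen_def)
qed

lemma Gen_n: "g \<in> hom C (fst X n) t \<Longrightarrow> fcomp (Gen C X n t g) n = g"
  using idr by (simp add: Gen_def)

end


context cc begin

lemma Gen_hom: "X \<in> fobjs C \<Longrightarrow> t \<in> Obj C \<Longrightarrow> g \<in> hom C (fst X n) t \<Longrightarrow>
   fcomp (Gen C X n t g) k \<in> hom C (fst X k) (fst (Tob C n t) k)"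
  using arrFCD[OF Gen_arr, of X t g n k] by (simp add: Gen_def)

lemma cofseq_level:
  assumes Ssub: "S \<subseteq> fobjs C" and zS: "zero (FC C) \<in> S"
    and TS: "\<And>n t. t \<in> Obj C \<Longrightarrow> Tob C n t \<in> S"
    and cs: "cofseq (fullsub (FC C) S) i p"
  shows "cofseq C (fcomp i n) (fcomp p n)"
proof -
  let ?D = "fullsub (FC C) S"
  define x where "x = fdom i"
  define y where "y = fcod i"
  define z where "z = fcod p"
  have icof: "i \<in> cofs ?D" and po: "is_pushout ?D i (to_zero ?D (dom ?D i)) (from_zero ?D (cod ?D p)) p"
    using cs unfolding cofseq_def by auto
  have iA: "i \<in> Arr (FC C)" "x \<in> S" "y \<in> S" and icn: "fcomp i n \<in> cofs C"
    using icof by (auto simp: fullsub_simps FC_simps cofsFC x_def y_def)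
  have pA: "p \<in> Arr (FC C)" "fdom p = y" "z \<in> S"
    using po unfolding is_pushout_def by (auto simp: fullsub_simps FC_simps y_def z_def)
  have xo: "x \<in> fobjs C" "y \<in> fobjs C" "z \<in> fobjs C" using iA pA Ssub by auto
  have tz: "to_zero ?D (dom ?D i) = ZF C x" using to_zero_sub[OF Ssub zS iA(2)] by (simp add: fullsub_simps FC_simps x_def)
  have fz: "from_zero ?D (cod ?D p) = FZ C z" using from_zero_sub[OF Ssub zS pA(3)] by (simp add: fullsub_simps FC_simps z_def)
  have sq: "comp (FC C) p i = comp (FC C) (FZ C z) (ZF C x)"
    using po unfolding is_pushout_def tz fz by (simp add: fullsub_simps)
  have univ: "\<And>t u v. t \<in> S \<Longrightarrow> u \<in> hom ?D y t \<Longrightarrow> v \<in> hom ?D (zero (FC C)) t \<Longrightarrow>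
      comp (FC C) u i = comp (FC C) v (ZF C x) \<Longrightarrow>
      (\<exists>!h. h \<in> hom ?D z t \<and> comp (FC C) h p = u \<and> comp (FC C) h (FZ C z) = v)"
  proof -
    fix t u v assume a: "t \<in> S" "u \<in> hom ?D y t" "v \<in> hom ?D (zero (FC C)) t"
      "comp (FC C) u i = comp (FC C) v (ZF C x)"
    have U: "\<forall>t\<in>Obj ?D. \<forall>u\<in>hom ?D (cod ?D i) t. \<forall>v\<in>hom ?D (cod ?D (ZF C x)) t.
        comp ?D u i = comp ?D v (ZF C x) \<longrightarrow>
        (\<exists>!h. h \<in> hom ?D (cod ?D p) t \<and> comp ?D h p = u \<and> comp ?D h (FZ C z) = v)"
      using po unfolding is_pushout_def tz fz by blast
    have "cod ?D i = y" "cod ?D (ZF C x) = zero (FC C)" "cod ?D p = z" "Obj ?D = S" "comp ?D = comp (FC C)"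
      by (simp_all add: fullsub_simps FC_simps y_def ZF_def z_def)
    then show "\<exists>!h. h \<in> hom ?D z t \<and> comp (FC C) h p = u \<and> comp (FC C) h (FZ C z) = v"
      using U a by simp
  qed
  have ih: "fcomp i k \<in> hom C (fst x k) (fst y k)" for k using arrFCD[OF iA(1)] by (simp add: x_def y_def)
  have ph: "fcomp p k \<in> hom C (fst y k) (fst z k)" for k using arrFCD[OF pA(1)] pA(2) by (simp add: z_def)
  have xk: "fst x k \<in> Obj C" "fst y k \<in> Obj C" "fst z k \<in> Obj C" for k using xo fobjD by auto
  show ?thesis
    unfolding cofseq_def is_pushout_def
  proof (intro conjI ballI impI)
    show "fcomp i n \<in> cofs C" by (rule icn)
    show "fcomp i n \<in> Arr C" using ih homD by blast
    show "to_zero C (dom C (fcomp i n)) \<in> Arr C" using homD[OF ih] to_zero_hom[OF xk(1)] homD by metis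
    show "from_zero C (cod C (fcomp p n)) \<in> Arr C" using homD[OF ph] from_zero_hom[OF xk(3)] homD by metis
    show "fcomp p n \<in> Arr C" using ph homD by blast
    show "dom C (to_zero C (dom C (fcomp i n))) = dom C (fcomp i n)"
      using homD[OF ih] to_zero_hom[OF xk(1)] homD by metis
    show "dom C (fcomp p n) = cod C (fcomp i n)" using homD[OF ih] homD[OF ph] by simp
    show "dom C (from_zero C (cod C (fcomp p n))) = cod C (to_zero C (dom C (fcomp i n)))"
      using homD[OF ih] homD[OF ph] to_zero_hom[OF xk(1)] from_zero_hom[OF xk(3)] homD by metis
    show "cod C (from_zero C (cod C (fcomp p n))) = cod C (fcomp p n)"
      using homD[OF ph] from_zero_hom[OF xk(3)] homD by metis
    have "fcomp (comp (FC C) p i) n = fcomp (comp (FC C) (FZ C z) (ZF C x)) n" using sq by simp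
    then show "comp C (fcomp p n) (fcomp i n) = comp C (from_zero C (cod C (fcomp p n))) (to_zero C (dom C (fcomp i n)))"
      using homD[OF ih] homD[OF ph] by (simp add: FC_simps FZ_def ZF_def)
  next
    fix t u v
    assume t: "t \<in> Obj C" and u0: "u \<in> hom C (cod C (fcomp i n)) t"
      and v0: "v \<in> hom C (cod C (to_zero C (dom C (fcomp i n)))) t"
      and uv: "comp C u (fcomp i n) = comp C v (to_zero C (dom C (fcomp i n)))"
    have u: "u \<in> hom C (fst y n) t" using u0 homD[OF ih] by simp
    have v: "v \<in> hom C (zero C) t" using v0 homD[OF ih] homD[OF to_zero_hom[OF xk(1)]] by metis
    have uv': "comp C u (fcomp i n) = comp C v (to_zero C (fst x n))" using uv homD[OF ih] by simp
    let ?T = "Tob C n t"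
    have TSt: "?T \<in> S" using TS[OF t] .
    have Tf: "?T \<in> fobjs C" using Tob_fobj[OF t] .
    define U where "U = Gen C y n t u"
    define V where "V = FZ C ?T"
    have UA: "U \<in> hom ?D y ?T" using Gen_arr[OF xo(2) t u] iA TSt by (simp add: hom_sub U_def Gen_def)
    have VA: "V \<in> hom ?D (zero (FC C)) ?T" using FZ_arr[OF Tf] zS TSt by (simp add: hom_sub V_def FZ_def)
    have eq1: "comp (FC C) U i = comp (FC C) V (ZF C x)"
    proof (rule fmor_eqI)
      fix k
      show "fcomp (comp (FC C) U i) k = fcomp (comp (FC C) V (ZF C x)) k"
      proof (cases "k \<le> n")
        case True
        have tr: "trd C y k (n - k) \<in> hom C (fst y k) (fst y n)" using trd_hom[OF xo(2), of k "n-k"] True by simp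
        have trx: "trd C x k (n - k) \<in> hom C (fst x k) (fst x n)" using trd_hom[OF xo(1), of k "n-k"] True by simp
        have nat: "comp C (trd C y k (n - k)) (fcomp i k) = comp C (fcomp i n) (trd C x k (n - k))"
          using trd_nat[OF iA(1), of k "n-k"] True by (simp add: x_def y_def)
        have "fcomp (comp (FC C) U i) k = comp C (comp C u (trd C y k (n - k))) (fcomp i k)"
          using True by (simp add: FC_simps U_def Gen_def)
        also have "\<dots> = comp C u (comp C (trd C y k (n - k)) (fcomp i k))" by (rule assoc[OF ih tr u, symmetric])
        also have "\<dots> = comp C u (comp C (fcomp i n) (trd C x k (n - k)))" using nat by simp
        also have "\<dots> = comp C (comp C u (fcomp i n)) (trd C x k (n - k))" by (rule assoc[OF trx ih u])
        also have "\<dots> = comp C (comp C v (to_zero C (fst x n))) (trd C x k (n - k))" using uv' by simp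
        also have "\<dots> = comp C v (comp C (to_zero C (fst x n)) (trd C x k (n - k)))"
          by (rule assoc[OF trx to_zero_hom[OF xk(1)] v, symmetric])
        also have "\<dots> = comp C v (to_zero C (fst x k))"
          using to_zero_uniq[OF comp_hom[OF trx to_zero_hom[OF xk(1)]] to_zero_hom[OF xk(1)]] by simp
        also have "\<dots> = comp C (from_zero C t) (to_zero C (fst x k))"
          using from_zero_uniq[OF v from_zero_hom[OF t]] by simp
        also have "\<dots> = fcomp (comp (FC C) V (ZF C x)) k"
          using True by (simp add: FC_simps V_def FZ_def ZF_def fst_Tob)
        finally show ?thesis .
      next
        case False
        have a: "fcomp (comp (FC C) U i) k \<in> hom C (fst x k) (zero C)"
          using comp_hom[OF ih[of k] Gen_hom[OF xo(2) t u, of k]]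
            False by (simp add: FC_simps U_def Gen_def fst_Tob)
        have b: "fcomp (comp (FC C) V (ZF C x)) k \<in> hom C (fst x k) (zero C)"
          using comp_hom[OF to_zero_hom[OF xk(1)[of k]] from_zero_hom[of "fst ?T k"]] zero_in
            False by (simp add: FC_simps V_def FZ_def ZF_def fst_Tob)
        show ?thesis using a b to_zero_uniq by blast
      qed
    qed (simp_all add: FC_simps U_def V_def Gen_def FZ_def ZF_def x_def)
    have GP: "Gen C z n t h \<in> hom ?D z ?T \<and> comp (FC C) (Gen C z n t h) p = U \<and>
              comp (FC C) (Gen C z n t h) (FZ C z) = V"
      if h: "h \<in> hom C (fst z n) t" and hu: "comp C h (fcomp p n) = u" for h
    proof (intro conjI)
      have GA: "Gen C z n t h \<in> Arr (FC C)" by (rule Gen_arr[OF xo(3) t h])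
      show "Gen C z n t h \<in> hom ?D z ?T" using GA pA TSt by (simp add: hom_sub Gen_def)
      show "comp (FC C) (Gen C z n t h) p = U"
      proof (rule fmor_eqI)
        fix k
        show "fcomp (comp (FC C) (Gen C z n t h) p) k = fcomp U k"
        proof (cases "k \<le> n")
          case True
          have trz: "trd C z k (n - k) \<in> hom C (fst z k) (fst z n)" using trd_hom[OF xo(3), of k "n-k"] True by simp
          have tyy: "trd C y k (n - k) \<in> hom C (fst y k) (fst y n)" using trd_hom[OF xo(2), of k "n-k"] True by simp
          have nat: "comp C (trd C z k (n - k)) (fcomp p k) = comp C (fcomp p n) (trd C y k (n - k))"
            using trd_nat[OF pA(1), of k "n-k"] True pA(2) by (simp add: z_def)
          have "fcomp (comp (FC C) (Gen C z n t h) p) k = comp C (comp C h (trd C z k (n - k))) (fcomp p k)"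
            using True by (simp add: FC_simps Gen_def)
          also have "\<dots> = comp C h (comp C (trd C z k (n - k)) (fcomp p k))" by (rule assoc[OF ph trz h, symmetric])
          also have "\<dots> = comp C h (comp C (fcomp p n) (trd C y k (n - k)))" using nat by simp
          also have "\<dots> = comp C (comp C h (fcomp p n)) (trd C y k (n - k))" by (rule assoc[OF tyy ph h])
          also have "\<dots> = fcomp U k" using hu True by (simp add: U_def Gen_def)
          finally show ?thesis .
        next
          case False
          have a: "fcomp (comp (FC C) (Gen C z n t h) p) k \<in> hom C (fst y k) (zero C)"
            using comp_hom[OF ph[of k] Gen_hom[OF xo(3) t h, of k]]
              False by (simp add: FC_simps Gen_def fst_Tob)
          have b: "fcomp U k \<in> hom C (fst y k) (zero C)"
            using Gen_hom[OF xo(2) t u, of k]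
              False by (simp add: U_def Gen_def fst_Tob)
          show ?thesis using a b to_zero_uniq by blast
        qed
      qed (simp_all add: FC_simps U_def Gen_def pA(2))
      show "comp (FC C) (Gen C z n t h) (FZ C z) = V"
      proof (rule fmor_eqI)
        fix k
        have a: "fcomp (comp (FC C) (Gen C z n t h) (FZ C z)) k \<in> hom C (zero C) (fst ?T k)"
          using comp_hom[OF from_zero_hom[OF xk(3)[of k]] Gen_hom[OF xo(3) t h, of k]]
          by (simp add: FC_simps Gen_def FZ_def)
        have b: "fcomp V k \<in> hom C (zero C) (fst ?T k)"
          using from_zero_hom[of "fst ?T k"] Tf fobjD
          by (simp add: V_def FZ_def)
        show "fcomp (comp (FC C) (Gen C z n t h) (FZ C z)) k = fcomp V k" using a b from_zero_uniq by blast
      qed (simp_all add: FC_simps V_def Gen_def FZ_def)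
    qed
    from univ[OF TSt UA VA eq1] obtain H where
      H: "H \<in> hom ?D z ?T" "comp (FC C) H p = U" "comp (FC C) H (FZ C z) = V"
      and Huniq: "\<And>H'. H' \<in> hom ?D z ?T \<and> comp (FC C) H' p = U \<and> comp (FC C) H' (FZ C z) = V \<Longrightarrow> H' = H"
      by blast
    have HA: "H \<in> Arr (FC C)" "fdom H = z" "fcod H = ?T" using H(1) by (auto simp: hom_sub)
    define h where "h = fcomp H n"
    have hh: "h \<in> hom C (fst z n) t" using arrFCD[OF HA(1), of n] HA by (simp add: h_def fst_Tob)
    have hu: "comp C h (fcomp p n) = u"
    proof -
      have "fcomp (comp (FC C) H p) n = fcomp U n" using H(2) by simp
      then show ?thesis using Gen_n[OF u] by (simp add: FC_simps h_def U_def)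
    qed
    show "\<exists>!h. h \<in> hom C (cod C (fcomp p n)) t \<and> comp C h (fcomp p n) = u \<and>
               comp C h (from_zero C (cod C (fcomp p n))) = v"
    proof (rule ex1I[of _ h])
      have cz: "cod C (fcomp p n) = fst z n" using homD[OF ph] by simp
      show "h \<in> hom C (cod C (fcomp p n)) t \<and> comp C h (fcomp p n) = u \<and>
               comp C h (from_zero C (cod C (fcomp p n))) = v"
        using hh hu cz from_zero_uniq[OF comp_hom[OF from_zero_hom[OF xk(3)] hh] v] by simp
      fix h' assume "h' \<in> hom C (cod C (fcomp p n)) t \<and> comp C h' (fcomp p n) = u \<and>
               comp C h' (from_zero C (cod C (fcomp p n))) = v"
      then have h': "h' \<in> hom C (fst z n) t" "comp C h' (fcomp p n) = u" using cz by auto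
      have "Gen C z n t h' = H" using Huniq GP[OF h'] by blast
      then have "fcomp (Gen C z n t h') n = h" by (simp add: h_def)
      then show "h' = h" using Gen_n[OF h'(1)] by simp
    qed
  qed
qed

end



definition shiftN :: "('o,'m) fobj \<Rightarrow> nat \<Rightarrow> ('o,'m) fobj" where
  "shiftN X N = ((\<lambda>k. fst X (k + N)), (\<lambda>k. snd X (k + N)))"
definition ThN :: "('o,'m) ccat \<Rightarrow> ('o,'m) fobj \<Rightarrow> nat \<Rightarrow> ('o,'m) fmor" where
  "ThN C X N = \<lparr> fdom = X, fcod = shiftN X N, fcomp = (\<lambda>k. trd C X k N) \<rparr>"
definition shiftF :: "('o,'m) fmor \<Rightarrow> nat \<Rightarrow> ('o,'m) fmor" where
  "shiftF f N = \<lparr> fdom = shiftN (fdom f) N, fcod = shiftN (fcod f) N, fcomp = (\<lambda>k. fcomp f (k + N)) \<rparr>"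

context cc begin

lemma arrFwbC: "f \<in> Arr (FwbC C w) \<longleftrightarrow> f \<in> Arr (FC C) \<and> fdom f \<in> Fwb C w \<and> fcod f \<in> Fwb C w"
  by (simp add: FwbC_def fullsub_simps FC_simps)
lemma Fwb_sub: "Fwb C w \<subseteq> fobjs C" by (auto simp: Fwb_iff)
lemma wst_iff: "f \<in> wst C w \<longleftrightarrow> f \<in> Arr (FC C) \<and> (\<exists>N. \<forall>n\<ge>N. fcomp f n \<in> w)"
  by (simp add: wst_def)

lemma cofseq_Fwb_level: "cofseq (FwbC C w) i p \<Longrightarrow> cofseq C (fcomp i n) (fcomp p n)"
  unfolding FwbC_def by (rule cofseq_level[OF Fwb_sub zF_Fwb Tob_Fwb])
lemma cofseq_FC_level: "cofseq (FC C) i p \<Longrightarrow> cofseq C (fcomp i n) (fcomp p n)"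
  using cofseq_level[OF order_refl zF_fobj Tob_fobj] unfolding FC_full by blast

lemma cofseq_arr: "cofseq (fullsub (FC C) S) i p \<Longrightarrow> i \<in> Arr (FC C) \<and> p \<in> Arr (FC C) \<and> fdom p = fcod i"
  unfolding cofseq_def is_pushout_def by (auto simp: fullsub_simps FC_simps)

lemma wst_triple:
  assumes ci: "\<And>n. cofseq C (fcomp i n) (fcomp p n)" and ci': "\<And>n. cofseq C (fcomp i' n) (fcomp p' n)"
    and A: "i \<in> Arr (FC C)" "p \<in> Arr (FC C)" "i' \<in> Arr (FC C)" "p' \<in> Arr (FC C)"
      "a \<in> Arr (FC C)" "b \<in> Arr (FC C)" "c \<in> Arr (FC C)"
    and E: "fdom p = fcod i" "fdom p' = fcod i'" "fdom a = fdom i" "fcod a = fdom i'"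
      "fdom b = fcod i" "fcod b = fcod i'" "fdom c = fcod p" "fcod c = fcod p'"
    and sq1: "comp (FC C) b i = comp (FC C) i' a" and sq2: "comp (FC C) c p = comp (FC C) p' b"
  shows "(a \<in> wst C w \<and> b \<in> wst C w \<longrightarrow> c \<in> wst C w) \<and>
         (a \<in> wst C w \<and> c \<in> wst C w \<longrightarrow> b \<in> wst C w) \<and>
         (b \<in> wst C w \<and> c \<in> wst C w \<longrightarrow> a \<in> wst C w)"
proof -
  have L: "(fcomp a n \<in> w \<and> fcomp b n \<in> w \<longrightarrow> fcomp c n \<in> w) \<and>
        (fcomp a n \<in> w \<and> fcomp c n \<in> w \<longrightarrow> fcomp b n \<in> w) \<and>
        (fcomp b n \<in> w \<and> fcomp c n \<in> w \<longrightarrow> fcomp a n \<in> w)" for n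
  proof (rule w_cofseq[OF ci ci'])
    have hi: "fcomp i n \<in> hom C (fst (fdom i) n) (fst (fcod i) n)" using arrFCD[OF A(1)] by blast
    have hp: "fcomp p n \<in> hom C (fst (fdom p) n) (fst (fcod p) n)" using arrFCD[OF A(2)] by blast
    have hi': "fcomp i' n \<in> hom C (fst (fdom i') n) (fst (fcod i') n)" using arrFCD[OF A(3)] by blast
    have hp': "fcomp p' n \<in> hom C (fst (fdom p') n) (fst (fcod p') n)" using arrFCD[OF A(4)] by blast
    have ha: "fcomp a n \<in> hom C (fst (fdom a) n) (fst (fcod a) n)" using arrFCD[OF A(5)] by blast
    have hb: "fcomp b n \<in> hom C (fst (fdom b) n) (fst (fcod b) n)" using arrFCD[OF A(6)] by blast
    have hc: "fcomp c n \<in> hom C (fst (fdom c) n) (fst (fcod c) n)" using arrFCD[OF A(7)] by blast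
    show "fcomp a n \<in> hom C (dom C (fcomp i n)) (dom C (fcomp i' n))"
      using ha homD[OF hi] homD[OF hi'] E by simp
    show "fcomp b n \<in> hom C (cod C (fcomp i n)) (cod C (fcomp i' n))"
      using hb homD[OF hi] homD[OF hi'] E by simp
    show "fcomp c n \<in> hom C (cod C (fcomp p n)) (cod C (fcomp p' n))"
      using hc homD[OF hp] homD[OF hp'] E by simp
    show "comp C (fcomp b n) (fcomp i n) = comp C (fcomp i' n) (fcomp a n)"
      using arg_cong[OF sq1, of "\<lambda>f. fcomp f n"] by (simp add: FC_simps)
    show "comp C (fcomp c n) (fcomp p n) = comp C (fcomp p' n) (fcomp b n)"
      using arg_cong[OF sq2, of "\<lambda>f. fcomp f n"] by (simp add: FC_simps)
  qed
  have ev: "\<exists>N. \<forall>n\<ge>N. fcomp r n \<in> w" if h1: "\<exists>N. \<forall>n\<ge>N. fcomp f n \<in> w" and h2: "\<exists>N. \<forall>n\<ge>N. fcomp g n \<in> w"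
     and h3: "\<And>n. fcomp f n \<in> w \<and> fcomp g n \<in> w \<longrightarrow> fcomp r n \<in> w" for f g r
  proof -
    obtain N1 N2 where a1: "\<forall>n\<ge>N1. fcomp f n \<in> w" and a2: "\<forall>n\<ge>N2. fcomp g n \<in> w" using h1 h2 by blast
    have "fcomp r n \<in> w" if "n \<ge> max N1 N2" for n
      using h3[of n] a1 a2 that by simp
    then have "\<forall>n\<ge>max N1 N2. fcomp r n \<in> w" by blast
    then show ?thesis by blast
  qed
  show ?thesis unfolding wst_iff using A L ev[of a b c] ev[of a c b] ev[of b c a] by blast
qed

end


context cc begin

abbreviation "WW \<equiv> wst C w \<inter> Arr (FwbC C w)"

lemma adm_iso: assumes iso: "is_iso (FwbC C w) f" shows "f \<in> WW"
proof -
  obtain g where fA: "f \<in> Arr (FwbC C w)" and g: "g \<in> hom (FwbC C w) (fcod f) (fdom f)"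
    and e1: "comp (FC C) g f = idm (FC C) (fdom f)" and e2: "comp (FC C) f g = idm (FC C) (fcod f)"
    using iso unfolding is_iso_def FwbC_def fullsub_simps FC_simps by blast
  have fA': "f \<in> Arr (FC C)" using fA arrFwbC by blast
  have gA: "g \<in> Arr (FC C)" "fdom g = fcod f" "fcod g = fdom f" using g by (auto simp: FwbC_def hom_sub)
  have "fcomp f n \<in> w" for n
  proof (rule iso_w)
    have hf: "fcomp f n \<in> hom C (fst (fdom f) n) (fst (fcod f) n)" using arrFCD[OF fA'] by blast
    have hg0: "fcomp g n \<in> hom C (fst (fdom g) n) (fst (fcod g) n)" using arrFCD[OF gA(1)] by blast
    have hg: "fcomp g n \<in> hom C (fst (fcod f) n) (fst (fdom f) n)" using hg0 unfolding gA(2,3) .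
    have "comp C (fcomp g n) (fcomp f n) = idm C (fst (fdom f) n)"
      using arg_cong[OF e1, of "\<lambda>f. fcomp f n"] by (simp add: FC_simps)
    moreover have "comp C (fcomp f n) (fcomp g n) = idm C (fst (fcod f) n)"
      using arg_cong[OF e2, of "\<lambda>f. fcomp f n"] by (simp add: FC_simps)
    moreover have "f' \<in> Arr C \<and> dom C f' = a \<and> cod C f' = b" if "f' \<in> hom C a b" for f' a b using that homD by blast
    ultimately show "is_iso C (fcomp f n)" unfolding is_iso_def using hf hg by metis
  qed
  then show "f \<in> WW" using fA fA' by (auto simp: wst_iff)
qed


lemma WWE: "f \<in> WW \<Longrightarrow> \<exists>N. \<forall>n\<ge>N. fcomp f n \<in> w" by (simp add: wst_iff)
lemma WWI: "f \<in> Arr (FwbC C w) \<Longrightarrow> \<forall>n\<ge>N. fcomp f n \<in> w \<Longrightarrow> f \<in> WW"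
  using arrFwbC wst_iff by blast

lemma adm_comp:
  assumes fA: "f \<in> Arr (FwbC C w)" and gA: "g \<in> Arr (FwbC C w)" and e': "fcod f = fdom g"
  shows "(f \<in> WW \<and> g \<in> WW \<longrightarrow> comp (FwbC C w) g f \<in> WW) \<and>
         (f \<in> WW \<and> comp (FwbC C w) g f \<in> WW \<longrightarrow> g \<in> WW) \<and>
         (g \<in> WW \<and> comp (FwbC C w) g f \<in> WW \<longrightarrow> f \<in> WW)"
proof -
  have fA': "f \<in> Arr (FC C)" using fA arrFwbC by blast
  have gA': "g \<in> Arr (FC C)" using gA arrFwbC by blast
  have hf0: "fcomp f n \<in> hom C (fst (fdom f) n) (fst (fcod f) n)" for n using arrFCD[OF fA'] by blast
  have hf: "fcomp f n \<in> hom C (fst (fdom f) n) (fst (fdom g) n)" for n using hf0[of n] unfolding e' .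
  have hg: "fcomp g n \<in> hom C (fst (fdom g) n) (fst (fcod g) n)" for n using arrFCD[OF gA'] by blast
  have cc: "comp (FwbC C w) g f = comp (FC C) g f" by (simp add: FwbC_def fullsub_simps)
  have cA0: "comp (FC C) g f \<in> Arr (FC C)" by (rule comp_arrFC[OF fA' gA' e'])
  have cA: "comp (FC C) g f \<in> Arr (FwbC C w)" using cA0 fA gA unfolding arrFwbC by (simp add: FC_simps)
  have fc: "fcomp (comp (FC C) g f) n = comp C (fcomp g n) (fcomp f n)" for n by (simp add: FC_simps)
  have P1: "comp (FwbC C w) g f \<in> WW" if a: "f \<in> WW" "g \<in> WW"
  proof -
    obtain N1 N2 where n1: "\<forall>n\<ge>N1. fcomp f n \<in> w" and n2: "\<forall>n\<ge>N2. fcomp g n \<in> w"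
      using WWE[OF a(1)] WWE[OF a(2)] by blast
    have "fcomp (comp (FC C) g f) n \<in> w" if "n \<ge> max N1 N2" for n
      unfolding fc using w_comp[OF hf hg] n1 n2 that by simp
    then show ?thesis unfolding cc using WWI[OF cA, of "max N1 N2"] by blast
  qed
  have P2: "g \<in> WW" if a: "f \<in> WW" "comp (FwbC C w) g f \<in> WW"
  proof -
    obtain N1 N2 where n1: "\<forall>n\<ge>N1. fcomp f n \<in> w" and n2: "\<forall>n\<ge>N2. fcomp (comp (FC C) g f) n \<in> w"
      using WWE[OF a(1)] WWE[OF a(2)] unfolding cc by blast
    have "fcomp g n \<in> w" if "n \<ge> max N1 N2" for n
      using w_left[OF hf hg] n1 n2 that unfolding fc by simp
    then show ?thesis using WWI[OF gA, of "max N1 N2"] by blast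
  qed
  have P3: "f \<in> WW" if a: "g \<in> WW" "comp (FwbC C w) g f \<in> WW"
  proof -
    obtain N1 N2 where n1: "\<forall>n\<ge>N1. fcomp g n \<in> w" and n2: "\<forall>n\<ge>N2. fcomp (comp (FC C) g f) n \<in> w"
      using WWE[OF a(1)] WWE[OF a(2)] unfolding cc by blast
    have "fcomp f n \<in> w" if "n \<ge> max N1 N2" for n
      using w_right[OF hf hg] n1 n2 that unfolding fc by simp
    then show ?thesis using WWI[OF fA, of "max N1 N2"] by blast
  qed
  show ?thesis using P1 P2 P3 by blast
qed


lemma adm_cof:
  assumes c1: "cofseq (FwbC C w) i p" and c2: "cofseq (FwbC C w) i' p'"
    and ha: "a \<in> hom (FwbC C w) (dom (FwbC C w) i) (dom (FwbC C w) i')"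
    and hb: "b \<in> hom (FwbC C w) (cod (FwbC C w) i) (cod (FwbC C w) i')"
    and hc: "c \<in> hom (FwbC C w) (cod (FwbC C w) p) (cod (FwbC C w) p')"
    and s1: "comp (FwbC C w) b i = comp (FwbC C w) i' a" and s2: "comp (FwbC C w) c p = comp (FwbC C w) p' b"
  shows "(a \<in> WW \<and> b \<in> WW \<longrightarrow> c \<in> WW) \<and> (a \<in> WW \<and> c \<in> WW \<longrightarrow> b \<in> WW) \<and>
         (b \<in> WW \<and> c \<in> WW \<longrightarrow> a \<in> WW)"
proof -
  have c1': "cofseq (fullsub (FC C) (Fwb C w)) i p" using c1 by (simp add: FwbC_def)
  have c2': "cofseq (fullsub (FC C) (Fwb C w)) i' p'" using c2 by (simp add: FwbC_def)
  note A1 = cofseq_arr[OF c1'] and A2 = cofseq_arr[OF c2']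
  have D: "dom (FwbC C w) = fdom" "cod (FwbC C w) = fcod" "comp (FwbC C w) = comp (FC C)"
    by (simp_all add: FwbC_def fullsub_simps FC_simps)
  have hs: "hom (FwbC C w) x y = {f \<in> Arr (FC C). fdom f \<in> Fwb C w \<and> fcod f \<in> Fwb C w \<and> fdom f = x \<and> fcod f = y}" for x y
    unfolding FwbC_def by (rule hom_sub)
  have aa: "a \<in> Arr (FC C)" "fdom a = fdom i" "fcod a = fdom i'" using ha unfolding hs D by auto
  have bb: "b \<in> Arr (FC C)" "fdom b = fcod i" "fcod b = fcod i'" using hb unfolding hs D by auto
  have cc: "c \<in> Arr (FC C)" "fdom c = fcod p" "fcod c = fcod p'" using hc unfolding hs D by auto
  have T: "(a \<in> wst C w \<and> b \<in> wst C w \<longrightarrow> c \<in> wst C w) \<and>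
         (a \<in> wst C w \<and> c \<in> wst C w \<longrightarrow> b \<in> wst C w) \<and>
         (b \<in> wst C w \<and> c \<in> wst C w \<longrightarrow> a \<in> wst C w)"
  proof (rule wst_triple[OF cofseq_Fwb_level[OF c1] cofseq_Fwb_level[OF c2]])
    show "i \<in> Arr (FC C)" "p \<in> Arr (FC C)" "fdom p = fcod i" using A1 by auto
    show "i' \<in> Arr (FC C)" "p' \<in> Arr (FC C)" "fdom p' = fcod i'" using A2 by auto
    show "a \<in> Arr (FC C)" "fdom a = fdom i" "fcod a = fdom i'" by (rule aa)+
    show "b \<in> Arr (FC C)" "fdom b = fcod i" "fcod b = fcod i'" by (rule bb)+
    show "c \<in> Arr (FC C)" "fdom c = fcod p" "fcod c = fcod p'" by (rule cc)+
    show "comp (FC C) b i = comp (FC C) i' a" using s1 unfolding D .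
    show "comp (FC C) c p = comp (FC C) p' b" using s2 unfolding D .
  qed
  have "a \<in> Arr (FwbC C w)" "b \<in> Arr (FwbC C w)" "c \<in> Arr (FwbC C w)" using ha hb hc by (auto simp: hom_def)
  then show ?thesis using T by blast
qed

lemma adm1: "admissible (FwbC C w) WW"
  unfolding admissible_def
proof (intro conjI)
  show "WW \<subseteq> Arr (FwbC C w)" by blast
  show "\<forall>f. is_iso (FwbC C w) f \<longrightarrow> f \<in> WW" using adm_iso by blast
  show "\<forall>f\<in>Arr (FwbC C w). \<forall>g\<in>Arr (FwbC C w). cod (FwbC C w) f = dom (FwbC C w) g \<longrightarrow>
       (f \<in> WW \<and> g \<in> WW \<longrightarrow> comp (FwbC C w) g f \<in> WW) \<and>
       (f \<in> WW \<and> comp (FwbC C w) g f \<in> WW \<longrightarrow> g \<in> WW) \<and>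
       (g \<in> WW \<and> comp (FwbC C w) g f \<in> WW \<longrightarrow> f \<in> WW)"
  proof (intro ballI impI)
    fix f g assume "f \<in> Arr (FwbC C w)" "g \<in> Arr (FwbC C w)" "cod (FwbC C w) f = dom (FwbC C w) g"
    then show "(f \<in> WW \<and> g \<in> WW \<longrightarrow> comp (FwbC C w) g f \<in> WW) \<and>
       (f \<in> WW \<and> comp (FwbC C w) g f \<in> WW \<longrightarrow> g \<in> WW) \<and>
       (g \<in> WW \<and> comp (FwbC C w) g f \<in> WW \<longrightarrow> f \<in> WW)"
      by (intro adm_comp) (simp_all add: FwbC_def fullsub_simps FC_simps)
  qed
  show "\<forall>i p i' p' a b c. cofseq (FwbC C w) i p \<and> cofseq (FwbC C w) i' p' \<and>
        a \<in> hom (FwbC C w) (dom (FwbC C w) i) (dom (FwbC C w) i') \<and>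
        b \<in> hom (FwbC C w) (cod (FwbC C w) i) (cod (FwbC C w) i') \<and>
        c \<in> hom (FwbC C w) (cod (FwbC C w) p) (cod (FwbC C w) p') \<and>
        comp (FwbC C w) b i = comp (FwbC C w) i' a \<and> comp (FwbC C w) c p = comp (FwbC C w) p' b \<longrightarrow>
        (a \<in> WW \<and> b \<in> WW \<longrightarrow> c \<in> WW) \<and> (a \<in> WW \<and> c \<in> WW \<longrightarrow> b \<in> WW) \<and>
        (b \<in> WW \<and> c \<in> WW \<longrightarrow> a \<in> WW)"
  proof (intro allI impI)
    fix i p i' p' a b c
    assume "cofseq (FwbC C w) i p \<and> cofseq (FwbC C w) i' p' \<and>
        a \<in> hom (FwbC C w) (dom (FwbC C w) i) (dom (FwbC C w) i') \<and>
        b \<in> hom (FwbC C w) (cod (FwbC C w) i) (cod (FwbC C w) i') \<and>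
        c \<in> hom (FwbC C w) (cod (FwbC C w) p) (cod (FwbC C w) p') \<and>
        comp (FwbC C w) b i = comp (FwbC C w) i' a \<and> comp (FwbC C w) c p = comp (FwbC C w) p' b"
    then show "(a \<in> WW \<and> b \<in> WW \<longrightarrow> c \<in> WW) \<and> (a \<in> WW \<and> c \<in> WW \<longrightarrow> b \<in> WW) \<and>
        (b \<in> WW \<and> c \<in> WW \<longrightarrow> a \<in> WW)"
      by (elim conjE) (rule adm_cof)
  qed
qed

end



lemma adm_compD: "admissible D W \<Longrightarrow> f \<in> Arr D \<Longrightarrow> g \<in> Arr D \<Longrightarrow> cod D f = dom D g \<Longrightarrow>
   f \<in> W \<Longrightarrow> g \<in> W \<Longrightarrow> comp D g f \<in> W"
  unfolding admissible_def by blast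
lemma adm_rightD: "admissible D W \<Longrightarrow> f \<in> Arr D \<Longrightarrow> g \<in> Arr D \<Longrightarrow> cod D f = dom D g \<Longrightarrow>
   g \<in> W \<Longrightarrow> comp D g f \<in> W \<Longrightarrow> f \<in> W"
  unfolding admissible_def by blast
lemma adm_sub: "admissible D W \<Longrightarrow> W \<subseteq> Arr D" unfolding admissible_def by blast

context cc begin

lemma shiftN_simps[simp]: "fst (shiftN X N) k = fst X (k + N)" "snd (shiftN X N) k = snd X (k + N)"
  by (simp_all add: shiftN_def)
lemma shift_simps[simp]: "fst (shift X) k = fst X (Suc k)" "snd (shift X) k = snd X (Suc k)"
  by (simp_all add: shift_def)

lemma shiftN_fobj: "X \<in> fobjs C \<Longrightarrow> shiftN X N \<in> fobjs C"
  unfolding fobjs_iff by simp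
lemma shiftN_Fwb: assumes "X \<in> Fwb C w" shows "shiftN X N \<in> Fwb C w"
proof -
  obtain M where M: "\<forall>n\<ge>M. snd X n \<in> w" and X: "X \<in> fobjs C" using assms by (auto simp: Fwb_iff)
  have "\<forall>n\<ge>M. snd (shiftN X N) n \<in> w" using M by simp
  then show ?thesis using shiftN_fobj[OF X] by (auto simp: Fwb_iff)
qed
lemma shift_eq: "shift X = shiftN X 1" by (simp add: shift_def shiftN_def)

lemma theta_arr: "X \<in> fobjs C \<Longrightarrow> theta X \<in> Arr (FC C)"
  unfolding arrFC theta_def using shiftN_fobj[of X 1] by (simp add: shift_eq fobjD2)

lemma theta_WW: assumes "X \<in> Fwb C w" shows "theta X \<in> WW"
proof -
  obtain M where M: "\<forall>n\<ge>M. snd X n \<in> w" and X: "X \<in> fobjs C" using assms by (auto simp: Fwb_iff)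
  have "theta X \<in> Arr (FwbC C w)" using theta_arr[OF X] assms shiftN_Fwb[OF assms, of 1]
    by (simp add: arrFwbC theta_def shift_eq)
  then show ?thesis using WWI M by (simp add: theta_def)
qed

lemma ThN_arr: assumes X: "X \<in> fobjs C" shows "ThN C X N \<in> Arr (FC C)"
proof -
  have "trd C X n N \<in> hom C (fst X n) (fst X (n + N)) \<and>
     comp C (snd X (n + N)) (trd C X n N) = comp C (trd C X (Suc n) N) (snd X n)" for n
    using trd_hom[OF X] trd_Suc_left[OF X, of n N] by simp
  then show ?thesis unfolding arrFC ThN_def using X shiftN_fobj[OF X] by simp
qed

lemma ThN_1: "X \<in> fobjs C \<Longrightarrow> ThN C X 1 = theta X"
  by (rule fmor_eqI) (simp_all add: ThN_def theta_def shift_eq idr[OF fobjD2])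

lemma ThN_Suc: "ThN C X (Suc N) = comp (FC C) (theta (shiftN X N)) (ThN C X N)"
  by (rule fmor_eqI) (simp_all add: ThN_def theta_def FC_simps shift_def shiftN_def add.commute)

lemma shiftF_arr: assumes f: "f \<in> Arr (FC C)" shows "shiftF f N \<in> Arr (FC C)"
  unfolding arrFC shiftF_def using arrFCD[OF f] shiftN_fobj by simp

lemma nat_ThN: assumes f: "f \<in> Arr (FC C)"
  shows "comp (FC C) (ThN C (fcod f) N) f = comp (FC C) (shiftF f N) (ThN C (fdom f) N)"
  by (rule fmor_eqI) (simp_all add: FC_simps ThN_def shiftF_def trd_nat[OF f])

lemma min1:
  assumes aW: "admissible (FwbC C w) W" and lwW: "lw C w \<inter> Arr (FwbC C w) \<subseteq> W"
    and thW: "Theta (Fwb C w) \<subseteq> W"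
  shows "WW \<subseteq> W"
proof
  have D: "dom (FwbC C w) = fdom" "cod (FwbC C w) = fcod" "comp (FwbC C w) = comp (FC C)"
    by (simp_all add: FwbC_def fullsub_simps FC_simps)
  have WA: "W \<subseteq> Arr (FwbC C w)" by (rule adm_sub[OF aW])
  have ThW: "ThN C X (Suc N) \<in> W" if X: "X \<in> Fwb C w" for X N
  proof (induction N)
    case 0 show ?case using ThN_1[of X] X Fwb_sub thW by (auto simp: Theta_def)
  next
    case (Suc N)
    have t: "theta (shiftN X (Suc N)) \<in> W" using thW shiftN_Fwb[OF X] by (auto simp: Theta_def)
    have "comp (FwbC C w) (theta (shiftN X (Suc N))) (ThN C X (Suc N)) \<in> W"
      by (rule adm_compD[OF aW _ _ _ Suc t]) (use WA Suc t in \<open>auto simp: D ThN_def theta_def\<close>)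
    then show ?case using ThN_Suc[of X "Suc N"] D by simp
  qed
  fix f assume fW: "f \<in> WW"
  obtain N where N: "\<forall>n\<ge>N. fcomp f n \<in> w" using WWE[OF fW] by blast
  have fA: "f \<in> Arr (FC C)" "fdom f \<in> Fwb C w" "fcod f \<in> Fwb C w" using fW arrFwbC by auto
  let ?M = "Suc N"
  have g: "shiftF f ?M \<in> W"
  proof -
    have "shiftF f ?M \<in> Arr (FwbC C w)" using shiftF_arr[OF fA(1), of ?M] fA shiftN_Fwb
      unfolding arrFwbC by (simp add: shiftF_def)
    moreover have "\<forall>n. fcomp (shiftF f ?M) n \<in> w" using N by (simp add: shiftF_def)
    ultimately show ?thesis using lwW by (auto simp: lw_def arrFwbC)
  qed
  have tX: "ThN C (fdom f) ?M \<in> W" and tY: "ThN C (fcod f) ?M \<in> W" using ThW fA by auto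
  have "comp (FwbC C w) (shiftF f ?M) (ThN C (fdom f) ?M) \<in> W"
    by (rule adm_compD[OF aW _ _ _ tX g]) (use WA tX g in \<open>auto simp: D ThN_def shiftF_def\<close>)
  then have "comp (FwbC C w) (ThN C (fcod f) ?M) f \<in> W" using nat_ThN[OF fA(1)] D by simp
  note cW = this
  show "f \<in> W"
    by (rule adm_rightD[OF aW _ _ _ tY cW]) (use WA tY fW in \<open>auto simp: D ThN_def\<close>)
qed


lemma wst_Fwb: assumes f: "f \<in> wst C w" shows "fdom f \<in> Fwb C w \<longleftrightarrow> fcod f \<in> Fwb C w"
proof -
  obtain N where N: "\<forall>n\<ge>N. fcomp f n \<in> w" and fA: "f \<in> Arr (FC C)" using f wst_iff by blast
  note A = arrFCD[OF fA]
  have hf: "fcomp f n \<in> hom C (fst (fdom f) n) (fst (fcod f) n)" for n using A by blast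
  have sx: "snd (fdom f) n \<in> hom C (fst (fdom f) n) (fst (fdom f) (Suc n))" for n using A fobjD2 by blast
  have sy: "snd (fcod f) n \<in> hom C (fst (fcod f) n) (fst (fcod f) (Suc n))" for n using A fobjD2 by blast
  have nat: "comp C (snd (fcod f) n) (fcomp f n) = comp C (fcomp f (Suc n)) (snd (fdom f) n)" for n using A by blast
  show ?thesis
  proof
    assume "fdom f \<in> Fwb C w"
    then obtain M where M: "\<forall>n\<ge>M. snd (fdom f) n \<in> w" by (auto simp: Fwb_iff)
    have "snd (fcod f) n \<in> w" if "n \<ge> max M N" for n
    proof (rule w_left[OF hf sy])
      show "fcomp f n \<in> w" using N that by simp
      have "comp C (fcomp f (Suc n)) (snd (fdom f) n) \<in> w"
        by (rule w_comp[OF sx hf]) (use N M that in simp_all)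
      then show "comp C (snd (fcod f) n) (fcomp f n) \<in> w" using nat by simp
    qed
    then have "\<forall>n\<ge>max M N. snd (fcod f) n \<in> w" by blast
    then show "fcod f \<in> Fwb C w" using A unfolding Fwb_iff by blast
  next
    assume "fcod f \<in> Fwb C w"
    then obtain M where M: "\<forall>n\<ge>M. snd (fcod f) n \<in> w" by (auto simp: Fwb_iff)
    have "snd (fdom f) n \<in> w" if "n \<ge> max M N" for n
    proof (rule w_right[OF sx hf])
      show "fcomp f (Suc n) \<in> w" using N that by simp
      have "comp C (snd (fcod f) n) (fcomp f n) \<in> w"
        by (rule w_comp[OF hf sy]) (use N M that in simp_all)
      then show "comp C (fcomp f (Suc n)) (snd (fdom f) n) \<in> w" using nat by simp
    qed
    then have "\<forall>n\<ge>max M N. snd (fdom f) n \<in> w" by blast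
    then show "fdom f \<in> Fwb C w" using A unfolding Fwb_iff by blast
  qed
qed

lemma serre_cof: assumes cs: "cofseq (FC C) i p"
  shows "(fdom i \<in> Fwb C w \<and> fcod i \<in> Fwb C w \<longrightarrow> fcod p \<in> Fwb C w) \<and>
         (fdom i \<in> Fwb C w \<and> fcod p \<in> Fwb C w \<longrightarrow> fcod i \<in> Fwb C w) \<and>
         (fcod i \<in> Fwb C w \<and> fcod p \<in> Fwb C w \<longrightarrow> fdom i \<in> Fwb C w)"
proof -
  have cs': "cofseq (fullsub (FC C) (fobjs C)) i p" using cs by (simp add: FC_full)
  note AA = cofseq_arr[OF cs']
  have iA: "i \<in> Arr (FC C)" and pA: "p \<in> Arr (FC C)" and e: "fdom p = fcod i" using AA by auto
  let ?x = "fdom i" and ?y = "fcod i" and ?z = "fcod p"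
  have L: "(snd ?x n \<in> w \<and> snd ?y n \<in> w \<longrightarrow> snd ?z n \<in> w) \<and>
        (snd ?x n \<in> w \<and> snd ?z n \<in> w \<longrightarrow> snd ?y n \<in> w) \<and>
        (snd ?y n \<in> w \<and> snd ?z n \<in> w \<longrightarrow> snd ?x n \<in> w)" for n
  proof (rule w_cofseq[OF cofseq_FC_level[OF cs] cofseq_FC_level[OF cs]])
    have hi: "fcomp i k \<in> hom C (fst ?x k) (fst ?y k)" for k using arrFCD[OF iA] by blast
    have hp: "fcomp p k \<in> hom C (fst ?y k) (fst ?z k)" for k using arrFCD[OF pA] e by metis
    show "snd ?x n \<in> hom C (dom C (fcomp i n)) (dom C (fcomp i (Suc n)))"
      using homD[OF hi[of n]] homD[OF hi[of "Suc n"]] fobjD2 arrFCD[OF iA] by simp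
    show "snd ?y n \<in> hom C (cod C (fcomp i n)) (cod C (fcomp i (Suc n)))"
      using homD[OF hi[of n]] homD[OF hi[of "Suc n"]] fobjD2 arrFCD[OF iA] by simp
    show "snd ?z n \<in> hom C (cod C (fcomp p n)) (cod C (fcomp p (Suc n)))"
      using homD[OF hp[of n]] homD[OF hp[of "Suc n"]] fobjD2 arrFCD[OF pA] by simp
    show "comp C (snd ?y n) (fcomp i n) = comp C (fcomp i (Suc n)) (snd ?x n)"
      using arrFCD[OF iA] by blast
    show "comp C (snd ?z n) (fcomp p n) = comp C (fcomp p (Suc n)) (snd ?y n)"
      using arrFCD[OF pA] e by metis
  qed
  have ob: "?x \<in> fobjs C" "?y \<in> fobjs C" "?z \<in> fobjs C" using arrFCD[OF iA] arrFCD[OF pA] by auto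
  have ev: "\<exists>N. \<forall>n\<ge>N. snd r n \<in> w" if h1: "\<exists>N. \<forall>n\<ge>N. snd f n \<in> w" and h2: "\<exists>N. \<forall>n\<ge>N. snd g n \<in> w"
     and h3: "\<And>n. snd f n \<in> w \<and> snd g n \<in> w \<longrightarrow> snd r n \<in> w" for f g r :: "('o,'m) fobj"
  proof -
    obtain N1 N2 where a1: "\<forall>n\<ge>N1. snd f n \<in> w" and a2: "\<forall>n\<ge>N2. snd g n \<in> w" using h1 h2 by blast
    have "snd r n \<in> w" if "n \<ge> max N1 N2" for n
      using h3[of n] a1 a2 that by simp
    then show ?thesis by blast
  qed
  have F: "X \<in> Fwb C w \<longleftrightarrow> (\<exists>N. \<forall>n\<ge>N. snd X n \<in> w)" if "X \<in> fobjs C" for X using that by (simp add: Fwb_iff)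
  show ?thesis
  proof (intro conjI impI)
    assume "?x \<in> Fwb C w \<and> ?y \<in> Fwb C w" then show "?z \<in> Fwb C w"
      using ev[of ?x ?y ?z] L F ob by blast
  next
    assume "?x \<in> Fwb C w \<and> ?z \<in> Fwb C w" then show "?y \<in> Fwb C w"
      using ev[of ?x ?z ?y] L F ob by blast
  next
    assume "?y \<in> Fwb C w \<and> ?z \<in> Fwb C w" then show "?x \<in> Fwb C w"
      using ev[of ?y ?z ?x] L F ob by blast
  qed
qed

lemma serre2: "wst_serre C w (Fwb C w)"
  unfolding wst_serre_def
proof (intro conjI allI impI)
  show "Fwb C w \<subseteq> Obj (FC C)" using Fwb_sub by (simp add: FC_simps)
next
  fix i p assume "cofseq (FC C) i p"
  then show "let x = fdom i; y = fcod i; z = fcod p in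
          (x \<in> Fwb C w \<and> y \<in> Fwb C w \<longrightarrow> z \<in> Fwb C w) \<and> (x \<in> Fwb C w \<and> z \<in> Fwb C w \<longrightarrow> y \<in> Fwb C w) \<and>
          (y \<in> Fwb C w \<and> z \<in> Fwb C w \<longrightarrow> x \<in> Fwb C w)"
    unfolding Let_def by (rule serre_cof)
next
  fix x y
  assume "x \<in> Fwb C w \<and>
        (\<lambda>a b. \<exists>f\<in>wst C w. (fdom f = a \<and> fcod f = b) \<or> (fdom f = b \<and> fcod f = a))\<^sup>*\<^sup>* x y"
  then have x: "x \<in> Fwb C w" and r: "(\<lambda>a b. \<exists>f\<in>wst C w. (fdom f = a \<and> fcod f = b) \<or> (fdom f = b \<and> fcod f = a))\<^sup>*\<^sup>* x y"
    by auto
  from r x show "y \<in> Fwb C w"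
  proof (induction rule: rtranclp_induct)
    case base then show ?case .
  next
    case (step b c)
    then obtain f where f: "f \<in> wst C w" and o: "(fdom f = b \<and> fcod f = c) \<or> (fdom f = c \<and> fcod f = b)" by blast
    have "b \<in> Fwb C w" using step by blast
    then show ?case using wst_Fwb[OF f] o by auto
  qed
qed

lemma jconst_Fwb: "jconst C ` Obj C \<subseteq> Fwb C w"
  using id_hom id_w by (auto simp: jconst_def Fwb_iff fobjs_iff)

end



definition truncF :: "('o,'m) ccat \<Rightarrow> ('o,'m) fobj \<Rightarrow> nat \<Rightarrow> ('o,'m) fobj" where
  "truncF C X N = ((\<lambda>k. fst X (min k N)), (\<lambda>k. if k < N then snd X k else idm C (fst X N)))"

context cc begin

lemma fst_truncF: "fst (truncF C X N) k = fst X (min k N)" by (simp add: truncF_def)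
lemma snd_truncF: "snd (truncF C X N) k = (if k < N then snd X k else idm C (fst X N))" by (simp add: truncF_def)

lemma truncF_fobj: assumes X: "X \<in> fobjs C" shows "truncF C X N \<in> fobjs C"
  unfolding fobjs_iff fst_truncF snd_truncF
proof (intro allI conjI)
  fix n
  show "fst X (min n N) \<in> Obj C" using fobjD[OF X] by blast
  show "(if n < N then snd X n else idm C (fst X N)) \<in> hom C (fst X (min n N)) (fst X (min (Suc n) N))"
  proof (cases "n < N")
    case True then show ?thesis using fobjD2[OF X, of n] by (simp add: min_def)
  next
    case False then show ?thesis using id_hom fobjD[OF X, of N] by (simp add: min_def)
  qed
qed

lemma min2:
  assumes S: "wst_serre C w S" and J: "jconst C ` Obj C \<subseteq> S" and XF: "X \<in> Fwb C w"
  shows "X \<in> S"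
proof -
  obtain N where N: "\<forall>n\<ge>N. snd X n \<in> w" and X: "X \<in> fobjs C" using XF by (auto simp: Fwb_iff)
  let ?T = "truncF C X N"
  have T: "?T \<in> fobjs C" by (rule truncF_fobj[OF X])
  define a where "a = \<lparr> fdom = ?T, fcod = X, fcomp = (\<lambda>k. if k < N then idm C (fst X k) else trd C X N (k - N)) \<rparr>"
  define b where "b = \<lparr> fdom = ?T, fcod = jconst C (fst X N),
       fcomp = (\<lambda>k. if k \<le> N then trd C X k (N - k) else idm C (fst X N)) \<rparr>"
  have XN: "fst X N \<in> Obj C" using fobjD[OF X] by blast
  have jf: "jconst C (fst X N) \<in> fobjs C" using J XN S unfolding wst_serre_def by (auto simp: FC_simps)
  have aA: "a \<in> Arr (FC C)"
    unfolding arrFC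
  proof (intro conjI allI)
    show "fdom a \<in> fobjs C" "fcod a \<in> fobjs C" using T X by (simp_all add: a_def)
    fix n
    show "fcomp a n \<in> hom C (fst (fdom a) n) (fst (fcod a) n)"
    proof (cases "n < N")
      case True then show ?thesis using id_hom fobjD[OF X] by (simp add: a_def fst_truncF)
    next
      case False then show ?thesis using trd_hom[OF X, of N "n - N"] id_hom[OF XN] by (simp add: a_def fst_truncF min_def)
    qed
    show "comp C (snd (fcod a) n) (fcomp a n) = comp C (fcomp a (Suc n)) (snd (fdom a) n)"
    proof (cases "n < N")
      case True
      have "comp C (snd X n) (idm C (fst X n)) = snd X n" using idr[OF fobjD2[OF X]] .
      moreover have "comp C (fcomp a (Suc n)) (snd X n) = snd X n"
      proof (cases "Suc n < N")
        case True then show ?thesis using idl[OF fobjD2[OF X]] by (simp add: a_def)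
      next
        case False then have "Suc n = N" using \<open>n < N\<close> by simp
        then show ?thesis using idl[OF fobjD2[OF X, of n]] by (simp add: a_def)
      qed
      ultimately show ?thesis using True by (simp add: a_def snd_truncF)
    next
      case False
      have h: "trd C X N (Suc (n - N)) \<in> hom C (fst X N) (fst X (N + Suc (n - N)))" using trd_hom[OF X] .
      have "comp C (snd X n) (trd C X N (n - N)) = trd C X N (Suc (n - N))" using False by simp
      moreover have "comp C (trd C X N (Suc (n - N))) (idm C (fst X N)) = trd C X N (Suc (n - N))"
        using idr[OF h] .
      moreover have "Suc n - N = Suc (n - N)" using False by simp
      ultimately show ?thesis using False by (simp add: a_def snd_truncF)
    qed
  qed
  have aW: "a \<in> wst C w"
  proof -
    have "\<forall>n\<ge>N. fcomp a n \<in> w" using trd_w[OF X N] by (simp add: a_def)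
    then show ?thesis using aA wst_iff by blast
  qed
  have bA: "b \<in> Arr (FC C)"
    unfolding arrFC
  proof (intro conjI allI)
    show "fdom b \<in> fobjs C" "fcod b \<in> fobjs C" using T jf by (simp_all add: b_def)
    fix n
    show "fcomp b n \<in> hom C (fst (fdom b) n) (fst (fcod b) n)"
    proof (cases "n \<le> N")
      case True then show ?thesis using trd_hom[OF X, of n "N - n"] by (simp add: b_def fst_truncF jconst_def)
    next
      case False then show ?thesis using id_hom[OF XN] by (simp add: b_def fst_truncF jconst_def min_def)
    qed
    show "comp C (snd (fcod b) n) (fcomp b n) = comp C (fcomp b (Suc n)) (snd (fdom b) n)"
    proof (cases "n < N")
      case True
      have h1: "trd C X n (N - n) \<in> hom C (fst X n) (fst X N)" using trd_hom[OF X, of n "N - n"] True by simp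
      have e: "trd C X n (N - n) = comp C (trd C X (Suc n) (N - Suc n)) (snd X n)"
        using trd_Suc_left[OF X, of n "N - Suc n"] True by (simp add: Suc_diff_Suc)
      show ?thesis using True idl[OF h1] e by (simp add: b_def snd_truncF jconst_def)
    next
      case False
      have "fcomp b n = idm C (fst X N)" "fcomp b (Suc n) = idm C (fst X N)" using False by (auto simp: b_def)
      then show ?thesis using False idl[OF id_hom[OF XN]] by (simp add: b_def snd_truncF jconst_def)
    qed
  qed
  have bW: "b \<in> wst C w"
  proof -
    have "\<forall>n\<ge>N. fcomp b n \<in> w" using id_w[OF XN] by (auto simp: b_def)
    then show ?thesis using bA wst_iff by blast
  qed
  let ?R = "\<lambda>a b. \<exists>f\<in>wst C w. (fdom f = a \<and> fcod f = b) \<or> (fdom f = b \<and> fcod f = a)"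
  have r1: "?R (jconst C (fst X N)) ?T" using bW by (intro bexI[of _ b]) (simp_all add: b_def)
  have r2: "?R ?T X" using aW by (intro bexI[of _ a]) (simp_all add: a_def)
  have "?R\<^sup>*\<^sup>* (jconst C (fst X N)) X" by (rule rtranclp.rtrancl_into_rtrancl[OF r_into_rtranclp[of ?R, OF r1] r2])
  moreover have "jconst C (fst X N) \<in> S" using J XN by blast
  ultimately show ?thesis using S unfolding wst_serre_def by blast
qed


lemma fact3:
  assumes fA0: "f \<in> Arr (FwbC C w)" and fb: "fdom f \<in> Fb C"
  shows "\<exists>i p u. i \<in> cofs (FC C) \<and> p \<in> Arr (FC C) \<and> p \<in> wst C w \<and>
           fdom i = fdom f \<and> fcod i = u \<and> fdom p = u \<and> fcod p = fcod f \<and>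
           u \<in> Fb C \<and> comp (FC C) p i = f"
proof -
  have fA: "f \<in> Arr (FC C)" and YF: "fcod f \<in> Fwb C w" using fA0 arrFwbC by auto
  define X where "X = fdom f"
  define Y where "Y = fcod f"
  have X: "X \<in> fobjs C" and Y: "Y \<in> fobjs C" using arrFCD[OF fA] by (auto simp: X_def Y_def)
  obtain a0 b0 where b0: "\<forall>k\<ge>b0. fst X k = fst X b0 \<and> snd X k = idm C (fst X b0)"
    using fb unfolding Fb_iff X_def by blast
  obtain N where N: "\<forall>n\<ge>N. snd Y n \<in> w" using YF by (auto simp: Fwb_iff Y_def)
  define M where "M = max b0 N"
  have XMb: "fst X M = fst X b0" using b0 unfolding M_def by (meson max.cobounded1)
  have XM: "\<forall>k\<ge>M. fst X k = fst X M \<and> snd X k = idm C (fst X M)"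
  proof (intro allI impI)
    fix k assume "k \<ge> M" then have "k \<ge> b0" by (simp add: M_def)
    then have "fst X k = fst X b0 \<and> snd X k = idm C (fst X b0)" using b0 by blast
    then show "fst X k = fst X M \<and> snd X k = idm C (fst X M)" unfolding XMb .
  qed
  have XMk: "fst X k = fst X M" if "k \<ge> M" for k using XM that by blast
  have XMs: "snd X k = idm C (fst X M)" if "k \<ge> M" for k using XM that by blast
  have hf: "fcomp f k \<in> hom C (fst X k) (fst Y k)" for k using arrFCD[OF fA] by (simp add: X_def Y_def)
  have natf: "comp C (snd Y k) (fcomp f k) = comp C (fcomp f (Suc k)) (snd X k)" for k
    using arrFCD[OF fA] by (simp add: X_def Y_def)
  obtain j q where jc: "j \<in> cofs C" and qw: "q \<in> w" and qA: "q \<in> Arr C" and dj: "dom C j = fst X M"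
    and cj: "cod C j = dom C q" and cq: "cod C q = fst Y M" and jq: "comp C q j = fcomp f M"
  proof -
    have fMA: "fcomp f M \<in> Arr C" and dfM: "dom C (fcomp f M) = fst X M" and cfM: "cod C (fcomp f M) = fst Y M"
      using homD[OF hf[of M]] by auto
    have "\<exists>i q. i \<in> cofs C \<and> q \<in> w \<and> q \<in> Arr C \<and>
        dom C i = dom C (fcomp f M) \<and> cod C i = dom C q \<and> cod C q = cod C (fcomp f M) \<and> comp C q i = fcomp f M"
      using fax fMA unfolding factorization_axiom_def by blast
    then show ?thesis using that unfolding dfM cfM by blast
  qed
  define U where "U = cod C j"
  have jA: "j \<in> Arr C" using jc cwc unfolding is_cat_with_cof_def by blast
  have hj: "j \<in> hom C (fst X M) U" using jA dj by (simp add: U_def hom_def)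
  have hq: "q \<in> hom C U (fst Y M)" using qA cj cq by (simp add: U_def hom_def)
  have UO: "U \<in> Obj C" using hom_obj[OF hj] by blast
  define u where "u = ((\<lambda>k. if k < M then fst X k else U),
     (\<lambda>k. if Suc k < M then snd X k else if Suc k = M then comp C j (snd X k) else idm C U))"
  have fu: "fst u k = (if k < M then fst X k else U)" for k by (simp add: u_def)
  have su: "snd u k = (if Suc k < M then snd X k else if Suc k = M then comp C j (snd X k) else idm C U)" for k
    by (simp add: u_def)
  have uf: "u \<in> fobjs C"
    unfolding fobjs_iff
  proof (intro allI conjI)
    fix k
    show "fst u k \<in> Obj C" using fobjD[OF X] UO by (simp add: fu)
    show "snd u k \<in> hom C (fst u k) (fst u (Suc k))"
    proof (cases "Suc k < M")
      case True then show ?thesis using fobjD2[OF X, of k] by (simp add: fu su)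
    next
      case False
      show ?thesis
      proof (cases "Suc k = M")
        case True
        have "snd X k \<in> hom C (fst X k) (fst X M)" using fobjD2[OF X, of k] True by simp
        then show ?thesis using True comp_hom[OF _ hj] by (simp add: fu su)
      next
        case False2: False
        then show ?thesis using False id_hom[OF UO] by (simp add: fu su)
      qed
    qed
  qed
  have uFb: "u \<in> Fb C"
  proof -
    have "\<forall>k\<ge>M. fst u k = fst u M \<and> snd u k = idm C (fst u M)" by (simp add: fu su)
    moreover have "\<forall>k<(0::nat). fst u k = zero C" by simp
    ultimately show ?thesis unfolding Fb_iff using uf by blast
  qed
  define i where "i = \<lparr> fdom = X, fcod = u, fcomp = (\<lambda>k. if k < M then idm C (fst X k) else j) \<rparr>"
  define p where "p = \<lparr> fdom = u, fcod = Y,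
     fcomp = (\<lambda>k. if k < M then fcomp f k else comp C (trd C Y M (k - M)) q) \<rparr>"
  have iA: "i \<in> Arr (FC C)"
    unfolding arrFC
  proof (intro conjI allI)
    show "fdom i \<in> fobjs C" "fcod i \<in> fobjs C" using X uf by (simp_all add: i_def)
    fix k
    show "fcomp i k \<in> hom C (fst (fdom i) k) (fst (fcod i) k)"
      using id_hom fobjD[OF X] hj XMk[of k] by (simp add: i_def fu)
    show "comp C (snd (fcod i) k) (fcomp i k) = comp C (fcomp i (Suc k)) (snd (fdom i) k)"
    proof (cases "Suc k < M")
      case True then show ?thesis using idl[OF fobjD2[OF X, of k]] idr[OF fobjD2[OF X, of k]]
        by (simp add: i_def su)
    next
      case False
      show ?thesis
      proof (cases "Suc k = M")
        case True
        have hs: "snd X k \<in> hom C (fst X k) (fst X M)" using fobjD2[OF X, of k] True by simp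
        show ?thesis using True idr[OF comp_hom[OF hs hj]] by (simp add: i_def su)
      next
        case False2: False
        then have kM: "k \<ge> M" using False by simp
        show ?thesis using False False2 kM idl[OF hj] idr[OF hj] XMs[OF kM] by (simp add: i_def su)
      qed
    qed
  qed
  have iC: "i \<in> cofs (FC C)" unfolding cofsFC using iA id_cof fobjD[OF X] jc by (simp add: i_def)
  have pA: "p \<in> Arr (FC C)"
    unfolding arrFC
  proof (intro conjI allI)
    show "fdom p \<in> fobjs C" "fcod p \<in> fobjs C" using Y uf by (simp_all add: p_def)
    fix k
    show "fcomp p k \<in> hom C (fst (fdom p) k) (fst (fcod p) k)"
    proof (cases "k < M")
      case True then show ?thesis using hf by (simp add: p_def fu)
    next
      case False
      have "trd C Y M (k - M) \<in> hom C (fst Y M) (fst Y k)" using trd_hom[OF Y, of M "k - M"] False by simp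
      then show ?thesis using False comp_hom[OF hq] by (simp add: p_def fu)
    qed
    show "comp C (snd (fcod p) k) (fcomp p k) = comp C (fcomp p (Suc k)) (snd (fdom p) k)"
    proof (cases "Suc k < M")
      case True then show ?thesis using natf by (simp add: p_def su)
    next
      case False
      show ?thesis
      proof (cases "Suc k = M")
        case True
        have hs: "snd X k \<in> hom C (fst X k) (fst X M)" using fobjD2[OF X, of k] True by simp
        have "comp C (snd Y k) (fcomp f k) = comp C (fcomp f M) (snd X k)" using natf[of k] True by simp
        also have "\<dots> = comp C (comp C q j) (snd X k)" using jq by simp
        also have "\<dots> = comp C q (comp C j (snd X k))" by (rule assoc[OF hs hj hq, symmetric])
        also have "\<dots> = comp C (comp C (trd C Y M 0) q) (comp C j (snd X k))" using idl[OF hq] by simp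
        finally show ?thesis using True by (simp add: p_def su)
      next
        case False2: False
        then have kM: "k \<ge> M" and kM': "\<not> Suc k < M" using False by simp_all
        have ht: "trd C Y M (k - M) \<in> hom C (fst Y M) (fst Y k)" using trd_hom[OF Y, of M "k - M"] kM by simp
        have ht2: "trd C Y M (Suc (k - M)) \<in> hom C (fst Y M) (fst Y (Suc k))"
          using trd_hom[OF Y, of M "Suc (k - M)"] kM by simp
        have "comp C (snd Y k) (comp C (trd C Y M (k - M)) q) = comp C (comp C (snd Y k) (trd C Y M (k - M))) q"
          by (rule assoc[OF hq ht fobjD2[OF Y]])
        also have "\<dots> = comp C (trd C Y M (Suc (k - M))) q" using kM by simp
        also have "\<dots> = comp C (comp C (trd C Y M (Suc (k - M))) q) (idm C U)"
          using idr[OF comp_hom[OF hq ht2]] by simp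
        finally show ?thesis using kM kM' False2 by (simp add: p_def su Suc_diff_le)
      qed
    qed
  qed
  have pW: "p \<in> wst C w"
  proof -
    have "fcomp p k \<in> w" if "k \<ge> M" for k
    proof -
      have "trd C Y M (k - M) \<in> w" using trd_w[OF Y N] by (simp add: M_def)
      moreover have "trd C Y M (k - M) \<in> hom C (fst Y M) (fst Y k)" using trd_hom[OF Y, of M "k - M"] that by simp
      ultimately show ?thesis using w_comp[OF hq _ qw] that by (simp add: p_def)
    qed
    then show ?thesis using pA wst_iff by blast
  qed
  have pi: "comp (FC C) p i = f"
  proof (rule fmor_eqI)
    show "fdom (comp (FC C) p i) = fdom f" by (simp add: FC_simps i_def X_def)
    show "fcod (comp (FC C) p i) = fcod f" by (simp add: FC_simps p_def Y_def)
    fix k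
    show "fcomp (comp (FC C) p i) k = fcomp f k"
    proof (cases "k < M")
      case True then show ?thesis using idr[OF hf] by (simp add: FC_simps p_def i_def)
    next
      case False
      have ht: "trd C Y M (k - M) \<in> hom C (fst Y M) (fst Y k)" using trd_hom[OF Y, of M "k - M"] False by simp
      have "comp C (comp C (trd C Y M (k - M)) q) j = comp C (trd C Y M (k - M)) (comp C q j)"
        by (rule assoc[OF hj hq ht, symmetric])
      also have "\<dots> = comp C (trd C Y M (k - M)) (fcomp f M)" using jq by simp
      also have "\<dots> = comp C (fcomp f (M + (k - M))) (trd C X M (k - M))"
        using trd_nat[OF fA, of M "k - M"] by (simp add: X_def Y_def)
      also have "\<dots> = comp C (fcomp f k) (idm C (fst X M))"
        using False trd_const[OF X XM, of M "k - M"] by simp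
      also have "\<dots> = fcomp f k" using idr[OF hf[of k]] XMk[of k] False by simp
      finally show ?thesis using False by (simp add: FC_simps p_def i_def)
    qed
  qed
  show ?thesis
    by (rule exI[of _ i], rule exI[of _ p], rule exI[of _ u])
       (use iC pA pW uFb pi in \<open>simp add: i_def p_def X_def Y_def\<close>)
qed

end


theorem lemma2p8:
  fixes C :: "('o,'m) ccat" and w :: "'m set"
  assumes "is_additive_cat_with_cof C"
    and "admissible C w"
    and "factorization_axiom C w"
  shows
    "(admissible (FwbC C w) (wst C w \<inter> Arr (FwbC C w)) \<and>
      lw C w \<inter> Arr (FwbC C w) \<subseteq> wst C w \<inter> Arr (FwbC C w) \<and>
      Theta (Fwb C w) \<subseteq> wst C w \<inter> Arr (FwbC C w) \<and>
      (\<forall>W. admissible (FwbC C w) W \<and> lw C w \<inter> Arr (FwbC C w) \<subseteq> W \<and> Theta (Fwb C w) \<subseteq> W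
            \<longrightarrow> wst C w \<inter> Arr (FwbC C w) \<subseteq> W))
   \<and>
     (wst_serre C w (Fwb C w) \<and> jconst C ` Obj C \<subseteq> Fwb C w \<and>
      (\<forall>S. wst_serre C w S \<and> jconst C ` Obj C \<subseteq> S \<longrightarrow> Fwb C w \<subseteq> S))
   \<and>
     (\<forall>f\<in>Arr (FwbC C w). fdom f \<in> Fb C \<longrightarrow>
        (\<exists>i p u. i \<in> cofs (FC C) \<and> p \<in> Arr (FC C) \<and> p \<in> wst C w \<and>
           fdom i = fdom f \<and> fcod i = u \<and> fdom p = u \<and> fcod p = fcod f \<and>
           u \<in> Fb C \<and> comp (FC C) p i = f))"
proof -
  interpret cc C w using assms by unfold_locales
  have p1: "lw C w \<inter> Arr (FwbC C w) \<subseteq> wst C w \<inter> Arr (FwbC C w)" by (auto simp: lw_def wst_def)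
  have p2: "Theta (Fwb C w) \<subseteq> wst C w \<inter> Arr (FwbC C w)" using theta_WW by (auto simp: Theta_def)
  have p3: "\<forall>W. admissible (FwbC C w) W \<and> lw C w \<inter> Arr (FwbC C w) \<subseteq> W \<and> Theta (Fwb C w) \<subseteq> W
            \<longrightarrow> wst C w \<inter> Arr (FwbC C w) \<subseteq> W" using min1 by blast
  have p4: "\<forall>S. wst_serre C w S \<and> jconst C ` Obj C \<subseteq> S \<longrightarrow> Fwb C w \<subseteq> S" using min2 by blast
  have p5: "\<forall>f\<in>Arr (FwbC C w). fdom f \<in> Fb C \<longrightarrow>
        (\<exists>i p u. i \<in> cofs (FC C) \<and> p \<in> Arr (FC C) \<and> p \<in> wst C w \<and>
           fdom i = fdom f \<and> fcod i = u \<and> fdom p = u \<and> fcod p = fcod f \<and>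
           u \<in> Fb C \<and> comp (FC C) p i = f)" using fact3 by blast
  show ?thesis using adm1 p1 p2 p3 serre2 jconst_Fwb p4 p5 by blast
qed

end
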